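(* The numbers $u_n=b_{n,4}(\Delta_{n-1})$, $n\ge1$, are determined by the induction $u_1=1$ and $u_n=n\,u_{n-1}+n$ for $n\ge2$.
   Context: $B_n^+$ is the positive braid monoid with generators $\sigma_1,\dots,\sigma_{n-1}$ and relations $\sigma_i\sigma_j=\sigma_j\sigma_i$ ($|i-j|\ge2$), $\sigma_i\sigma_j\sigma_i=\sigma_j\sigma_i\sigma_j$ ($|i-j|=1$). $\Delta_1=1$, $\Delta_m=\sigma_1\cdots\sigma_{m-1}\Delta_{m-1}$. Simple $n$-braids are the left (equivalently right) divisors of $\Delta_n$ in $B_n^+$. For simple $x$, $D_L(x)$ (resp. $D_R(x)$) is the set of $i\in\{1,\dots,n-1\}$ with $\sigma_i$ a left (resp. right) divisor of $x$. A sequence $(x_1,\dots,x_d)$ of simple $n$-braids is normal if $x_k=\gcd(\Delta_n,x_k\cdots x_d)$ (greatest common left divisor) for each $k$; equivalently $D_R(x_k)\supseteq D_L(x_{k+1})$ for all $k<d$. For a simple $n$-braid $x$, $b_{n,d}(x)$ is the number of normal sequences $(x_1,\dots,x_{d-1},x)$ of simple $n$-braids. *)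

theory Defs
  imports Main
begin

text \<open>Positive braid words: a word is a list of generator indices, i stands for sigma_i.
  One-step application of a defining relation of the positive braid monoid inside a word.\<close>
inductive braid_step :: "nat list \<Rightarrow> nat list \<Rightarrow> bool" where
  comm: "(i::nat) \<ge> j + 2 \<or> j \<ge> i + 2 \<Longrightarrow> braid_step (u @ [i, j] @ v) (u @ [j, i] @ v)"
| braid: "(i::nat) = j + 1 \<or> j = i + 1 \<Longrightarrow> braid_step (u @ [i, j, i] @ v) (u @ [j, i, j] @ v)"

definition braid_eq :: "nat list \<Rightarrow> nat list \<Rightarrow> bool" where
  "braid_eq = equivclp braid_step"

definition words :: "nat \<Rightarrow> nat list set" where
  "words n = lists {1..<n}"

text \<open>The element of B_n^+ represented by a word: its equivalence class.\<close>
definition cls :: "nat \<Rightarrow> nat list \<Rightarrow> nat list set" where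
  "cls n w = {v \<in> words n. braid_eq v w}"

fun Delta :: "nat \<Rightarrow> nat list" where
  "Delta 0 = []"
| "Delta (Suc m) = [1..<Suc m] @ Delta m"

definition left_div :: "nat \<Rightarrow> nat list \<Rightarrow> nat list \<Rightarrow> bool" where
  "left_div n a b \<longleftrightarrow> (\<exists>c \<in> words n. braid_eq (a @ c) b)"

definition right_div :: "nat \<Rightarrow> nat list \<Rightarrow> nat list \<Rightarrow> bool" where
  "right_div n a b \<longleftrightarrow> (\<exists>c \<in> words n. braid_eq (c @ a) b)"

definition simples :: "nat \<Rightarrow> nat list set set" where
  "simples n = cls n ` {w \<in> words n. left_div n w (Delta n)}"

definition DL :: "nat \<Rightarrow> nat list set \<Rightarrow> nat set" where
  "DL n x = {i \<in> {1..<n}. \<exists>w \<in> x. left_div n [i] w}"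

definition DR :: "nat \<Rightarrow> nat list set \<Rightarrow> nat set" where
  "DR n x = {i \<in> {1..<n}. \<exists>w \<in> x. right_div n [i] w}"

text \<open>Normal sequences of simple n-braids (characterisation D_R(x_k) contains D_L(x_(k+1))).\<close>
definition normal_seq :: "nat \<Rightarrow> nat list set list \<Rightarrow> bool" where
  "normal_seq n xs \<longleftrightarrow> set xs \<subseteq> simples n \<and>
     (\<forall>k. Suc k < length xs \<longrightarrow> DL n (xs ! Suc k) \<subseteq> DR n (xs ! k))"

definition b :: "nat \<Rightarrow> nat \<Rightarrow> nat list set \<Rightarrow> nat" where
  "b n d x = card {xs. length xs = d \<and> normal_seq n xs \<and> last xs = x}"

end

theory Submission
  imports Defs
begin

definition sw :: "nat \<Rightarrow> nat \<Rightarrow> nat" where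
  "sw a v = (if v = a then Suc a else if v = Suc a then a else v)"

fun pf :: "nat list \<Rightarrow> nat \<Rightarrow> nat" where
  "pf [] = id"
| "pf (a # w) = sw a \<circ> pf w"

definition pl :: "nat \<Rightarrow> nat list \<Rightarrow> nat list" where
  "pl n w = map (pf w) [1..<Suc n]"

lemma pf_append: "pf (u @ v) = pf u \<circ> pf v"
  by (induction u) auto

lemma sw_sw[simp]: "sw a (sw a v) = v"
  by (simp add: sw_def)

lemma braid_step_pf: "braid_step u v \<Longrightarrow> pf u = pf v"
proof (induction rule: braid_step.induct)
  case (comm i j u v)
  have "\<And>x. sw i (sw j x) = sw j (sw i x)" using comm by (auto simp: sw_def)
  then show ?case by (simp add: pf_append fun_eq_iff)
next
  case (braid i j u v)
  have "\<And>x. sw i (sw j (sw i x)) = sw j (sw i (sw j x))" using braid by (auto simp: sw_def)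
  then show ?case by (simp add: pf_append fun_eq_iff)
qed

lemma braid_step_length: "braid_step u v \<Longrightarrow> length u = length v"
  by (induction rule: braid_step.induct) auto

lemma braid_step_set: "braid_step u v \<Longrightarrow> set u = set v"
  by (induction rule: braid_step.induct) auto

lemma equivclp_inv:
  assumes "\<And>u v. r u v \<Longrightarrow> f u = f v" and "equivclp r x y"
  shows "f x = f y"
proof -
  have "(symclp r)\<^sup>*\<^sup>* x y" using assms(2) by (simp add: equivclp_def)
  then show ?thesis
    by (induction rule: rtranclp_induct) (auto simp: symclp_def dest: assms(1))
qed

lemma equivclp_cong:
  assumes "\<And>u v. r u v \<Longrightarrow> r (f u) (f v)" and "equivclp r x y"
  shows "equivclp r (f x) (f y)"
proof -
  have "(symclp r)\<^sup>*\<^sup>* x y" using assms(2) by (simp add: equivclp_def)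
  then show ?thesis
  proof (induction rule: rtranclp_induct)
    case base then show ?case by (simp add: equivclp_def)
  next
    case (step y z)
    have "symclp r (f y) (f z)" using step(2) assms(1) by (auto simp: symclp_def)
    then have "equivclp r (f y) (f z)" by (simp add: equivclp_def)
    with step(3) show ?case by (meson transpD transp_equivclp)
  qed
qed

lemma braid_eq_pf: "braid_eq u v \<Longrightarrow> pf u = pf v"
  unfolding braid_eq_def by (rule equivclp_inv[where f=pf]) (auto dest: braid_step_pf)

lemma braid_eq_pl: "braid_eq u v \<Longrightarrow> pl n u = pl n v"
  by (simp add: pl_def braid_eq_pf)

lemma braid_eq_length: "braid_eq u v \<Longrightarrow> length u = length v"
  unfolding braid_eq_def by (rule equivclp_inv[where f=length]) (auto dest: braid_step_length)

lemma braid_eq_set: "braid_eq u v \<Longrightarrow> set u = set v"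
  unfolding braid_eq_def by (rule equivclp_inv[where f=set]) (auto dest: braid_step_set)

lemma braid_eq_words: "braid_eq u v \<Longrightarrow> u \<in> words n \<longleftrightarrow> v \<in> words n"
  by (auto simp: words_def dest: braid_eq_set)

lemma braid_step_ctx: "braid_step u v \<Longrightarrow> braid_step (x @ u @ y) (x @ v @ y)"
proof (induction rule: braid_step.induct)
  case (comm i j u v)
  then show ?case using braid_step.comm[where i=i and j=j and u="x @ u" and v="v @ y"] by simp
next
  case (braid i j u v)
  then show ?case using braid_step.braid[where i=i and j=j and u="x @ u" and v="v @ y"] by simp
qed

lemma braid_eq_ctx: "braid_eq u v \<Longrightarrow> braid_eq (x @ u @ y) (x @ v @ y)"
  unfolding braid_eq_def by (rule equivclp_cong[where f="\<lambda>u. x @ u @ y"]) (auto intro: braid_step_ctx)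

lemma braid_eq_Cons: "braid_eq u v \<Longrightarrow> braid_eq (a # u) (a # v)"
  using braid_eq_ctx[of u v "[a]" "[]"] by simp

lemma braid_eq_app: "braid_eq u v \<Longrightarrow> braid_eq (u @ c) (v @ c)"
  using braid_eq_ctx[of u v "[]" c] by simp

lemma braid_eq_refl[simp]: "braid_eq u u"
  by (simp add: braid_eq_def)

lemma braid_eq_sym: "braid_eq u v \<Longrightarrow> braid_eq v u"
  by (simp add: braid_eq_def equivclp_sym)

lemma braid_eq_trans: "braid_eq u v \<Longrightarrow> braid_eq v w \<Longrightarrow> braid_eq u w"
  unfolding braid_eq_def by (meson transpD transp_equivclp)

lemma braid_eq_step: "braid_step u v \<Longrightarrow> braid_eq u v"
  unfolding braid_eq_def equivclp_def by (auto simp: symclp_def)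

lemma braid_eq_comm: "i \<ge> j + 2 \<or> j \<ge> i + 2 \<Longrightarrow> braid_eq (i # j # t) (j # i # t)"
  using braid_step.comm[where i=i and j=j and u="[]" and v=t] by (auto intro: braid_eq_step)

lemma braid_eq_braid: "i = j + 1 \<or> j = i + 1 \<Longrightarrow> braid_eq (i # j # i # t) (j # i # j # t)"
  using braid_step.braid[where i=i and j=j and u="[]" and v=t] by (auto intro: braid_eq_step)

definition invs :: "nat list \<Rightarrow> (nat \<times> nat) set" where
  "invs p = {(k, l). k < l \<and> l < length p \<and> p ! l < p ! k}"

definition inv :: "nat list \<Rightarrow> nat" where
  "inv p = card (invs p)"

lemma finite_invs[simp]: "finite (invs p)"
  by (rule finite_subset[of _ "{..<length p} \<times> {..<length p}"]) (auto simp: invs_def)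

lemma inj_sw: "inj (sw a)"
  by (metis injI sw_sw)

lemma sw_less:
  assumes "u \<noteq> v" "\<not> (u = a \<and> v = Suc a)" "\<not> (u = Suc a \<and> v = a)"
  shows "sw a u < sw a v \<longleftrightarrow> u < v"
  using assms by (auto simp: sw_def)

lemma sw_mono: "k < l \<Longrightarrow> \<not> (k = i \<and> l = Suc i) \<Longrightarrow> sw i k < sw i l"
  unfolding sw_def by auto

definition ldesc :: "nat list \<Rightarrow> nat \<Rightarrow> bool" where
  "ldesc p a \<longleftrightarrow> (\<exists>k l. k < l \<and> l < length p \<and> p ! k = Suc a \<and> p ! l = a)"

lemma inv_left:
  assumes d: "distinct p" and a: "a \<in> set p" "Suc a \<in> set p"
  shows "ldesc p a \<Longrightarrow> inv (map (sw a) p) + 1 = inv p"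
    and "\<not> ldesc p a \<Longrightarrow> inv (map (sw a) p) = inv p + 1"
proof -
  obtain i where i: "i < length p" "p ! i = a" using a(1) by (auto simp: in_set_conv_nth)
  obtain j where j: "j < length p" "p ! j = Suc a" using a(2) by (auto simp: in_set_conv_nth)
  have ij: "i \<noteq> j" using i j by auto
  have mi: "map (sw a) p ! i = Suc a" "map (sw a) p ! j = a" using i j by (simp_all add: sw_def)
  have uniq: "\<And>k. k < length p \<Longrightarrow> p ! k = a \<Longrightarrow> k = i" "\<And>k. k < length p \<Longrightarrow> p ! k = Suc a \<Longrightarrow> k = j"
    using nth_eq_iff_index_eq[OF d _ i(1)] i(2) nth_eq_iff_index_eq[OF d _ j(1)] j(2) by auto
  have gen: "(k, l) \<in> invs (map (sw a) p) \<longleftrightarrow> (k, l) \<in> invs p"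
    if "\<not> (k = i \<and> l = j)" "\<not> (k = j \<and> l = i)" for k l
  proof (cases "k < l \<and> l < length p")
    case True
    then have "p ! k \<noteq> p ! l" using d by (simp add: nth_eq_iff_index_eq)
    moreover have "\<not> (p ! l = a \<and> p ! k = Suc a)"
    proof
      assume "p ! l = a \<and> p ! k = Suc a"
      then have "l = i" "k = j" using uniq True by auto
      with that show False by auto
    qed
    moreover have "\<not> (p ! l = Suc a \<and> p ! k = a)"
    proof
      assume "p ! l = Suc a \<and> p ! k = a"
      then have "l = j" "k = i" using uniq True by auto
      with that show False by auto
    qed
    ultimately have "sw a (p ! l) < sw a (p ! k) \<longleftrightarrow> p ! l < p ! k"
      by (intro sw_less) auto
    then show ?thesis using True by (simp add: invs_def)
  next
    case False
    then show ?thesis by (auto simp: invs_def)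
  qed
  show "ldesc p a \<Longrightarrow> inv (map (sw a) p) + 1 = inv p"
  proof -
    assume "ldesc p a"
    then obtain k l where "k < l" "l < length p" "p ! k = Suc a" "p ! l = a" unfolding ldesc_def by blast
    then have "j < i" using uniq[of k] uniq[of l] by simp
    have "invs (map (sw a) p) = invs p - {(j, i)}"
    proof (rule set_eqI, clarify)
      fix k l show "(k, l) \<in> invs (map (sw a) p) \<longleftrightarrow> (k, l) \<in> invs p - {(j, i)}"
      proof (cases "(k, l) = (j, i)")
        case True then show ?thesis using mi i j by (auto simp: invs_def)
      next
        case False
        show ?thesis
        proof (cases "(k, l) = (i, j)")
          case True then show ?thesis using \<open>j < i\<close> by (auto simp: invs_def)
        next
          case False2: False
          then show ?thesis using gen[of k l] False by auto
        qed
      qed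
    qed
    moreover have "(j, i) \<in> invs p" using \<open>j < i\<close> i j by (simp add: invs_def)
    ultimately show ?thesis unfolding inv_def
    proof -
      assume e: "invs (map (sw a) p) = invs p - {(j, i)}" and m: "(j, i) \<in> invs p"
      have "card (invs p) > 0" using m card_gt_0_iff by fastforce
      moreover have "card (invs p - {(j, i)}) = card (invs p) - 1" using m by (simp add: card_Diff_singleton)
      ultimately show "card (invs (map (sw a) p)) + 1 = card (invs p)" using e by simp
    qed
  qed
  show "\<not> ldesc p a \<Longrightarrow> inv (map (sw a) p) = inv p + 1"
  proof -
    assume "\<not> ldesc p a"
    then have "\<not> j < i" using i j unfolding ldesc_def by blast
    then have "i < j" using ij by simp
    have "invs (map (sw a) p) = insert (i, j) (invs p)"
    proof (rule set_eqI, clarify)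
      fix k l show "(k, l) \<in> invs (map (sw a) p) \<longleftrightarrow> (k, l) \<in> insert (i, j) (invs p)"
      proof (cases "(k, l) = (i, j)")
        case True then show ?thesis using mi i j \<open>i < j\<close> by (auto simp: invs_def)
      next
        case False
        show ?thesis
        proof (cases "(k, l) = (j, i)")
          case True then show ?thesis using \<open>i < j\<close> by (auto simp: invs_def)
        next
          case False2: False
          then show ?thesis using gen[of k l] False by auto
        qed
      qed
    qed
    moreover have "(i, j) \<notin> invs p" using \<open>i < j\<close> i j by (simp add: invs_def)
    ultimately show ?thesis unfolding inv_def by simp
  qed
qed

definition swp :: "nat \<Rightarrow> nat list \<Rightarrow> nat list" where
  "swp i p = p[i := p ! Suc i, Suc i := p ! i]"

lemma swp_nth: "Suc i < length p \<Longrightarrow> k < length p \<Longrightarrow> swp i p ! k = p ! (sw i k)"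
  by (auto simp: swp_def sw_def nth_list_update)

lemma length_swp[simp]: "length (swp i p) = length p"
  by (simp add: swp_def)

lemma sw_lt_len: "Suc i < m \<Longrightarrow> sw i k < m \<longleftrightarrow> k < m"
  by (auto simp: sw_def)

lemma inv_right:
  assumes d: "distinct p" and i: "Suc i < length p"
  shows "p ! Suc i < p ! i \<Longrightarrow> inv (swp i p) + 1 = inv p"
    and "p ! i < p ! Suc i \<Longrightarrow> inv (swp i p) = inv p + 1"
proof -
  let ?g = "\<lambda>(k, l). (sw i k, sw i l)"
  have swi: "sw i i = Suc i" "sw i (Suc i) = i" by (simp_all add: sw_def)
  have A: "invs (swp i p) - {(i, Suc i)} = ?g ` (invs p - {(i, Suc i)})"
  proof (rule set_eqI, clarify)
    fix k l
    show "(k, l) \<in> invs (swp i p) - {(i, Suc i)} \<longleftrightarrow> (k, l) \<in> ?g ` (invs p - {(i, Suc i)})"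
    proof
      assume H: "(k, l) \<in> invs (swp i p) - {(i, Suc i)}"
      then have kl: "k < l" "l < length p" "swp i p ! l < swp i p ! k" "(k, l) \<noteq> (i, Suc i)"
        by (auto simp: invs_def)
      have "sw i k < sw i l" using kl(1,4) by (intro sw_mono) auto
      moreover have "sw i l < length p" using kl i sw_lt_len by blast
      moreover have "(sw i k, sw i l) \<noteq> (i, Suc i)"
      proof
        assume "(sw i k, sw i l) = (i, Suc i)"
        then have "k = Suc i" "l = i" using sw_sw[of i k] sw_sw[of i l] swi by auto
        with kl(1) show False by simp
      qed
      ultimately have "(sw i k, sw i l) \<in> invs p - {(i, Suc i)}"
        using kl swp_nth[OF i] by (auto simp: invs_def)
      moreover have "(k, l) = ?g (sw i k, sw i l)" by simp
      ultimately show "(k, l) \<in> ?g ` (invs p - {(i, Suc i)})" by blast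
    next
      assume "(k, l) \<in> ?g ` (invs p - {(i, Suc i)})"
      then obtain k' l' where H: "(k', l') \<in> invs p" "(k', l') \<noteq> (i, Suc i)" "k = sw i k'" "l = sw i l'" by auto
      then have kl: "k' < l'" "l' < length p" "p ! l' < p ! k'" by (auto simp: invs_def)
      have "k < l" using H kl by (simp add: sw_mono)
      moreover have "l < length p" using kl i H sw_lt_len by blast
      moreover have "(k, l) \<noteq> (i, Suc i)"
      proof
        assume "(k, l) = (i, Suc i)"
        then have "k' = Suc i" "l' = i" using H(3,4) sw_sw[of i k'] sw_sw[of i l'] swi by auto
        with kl(1) show False by simp
      qed
      moreover have "k < length p" using \<open>k < l\<close> \<open>l < length p\<close> by simp
      ultimately show "(k, l) \<in> invs (swp i p) - {(i, Suc i)}"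
        using kl H swp_nth[OF i] by (auto simp: invs_def)
    qed
  qed
  have injg: "inj ?g" by (rule inj_on_inverseI[where g="?g"]) auto
  have C: "card (invs (swp i p) - {(i, Suc i)}) = card (invs p - {(i, Suc i)})"
    unfolding A by (rule card_image) (rule inj_on_subset[OF injg], simp)
  have s1: "swp i p ! i = p ! Suc i" "swp i p ! Suc i = p ! i"
    using swp_nth[OF i] i swi by auto
  show "p ! Suc i < p ! i \<Longrightarrow> inv (swp i p) + 1 = inv p"
  proof -
    assume lt: "p ! Suc i < p ! i"
    have "(i, Suc i) \<in> invs p" using lt i by (simp add: invs_def)
    moreover have "(i, Suc i) \<notin> invs (swp i p)" using lt s1 by (simp add: invs_def)
    ultimately show ?thesis using C unfolding inv_def
    proof -
      assume m: "(i, Suc i) \<in> invs p" and m2: "(i, Suc i) \<notin> invs (swp i p)"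
        and C: "card (invs (swp i p) - {(i, Suc i)}) = card (invs p - {(i, Suc i)})"
      have "card (invs p) > 0" using m card_gt_0_iff by fastforce
      moreover have "card (invs p - {(i, Suc i)}) = card (invs p) - 1" using m by (simp add: card_Diff_singleton)
      moreover have "invs (swp i p) - {(i, Suc i)} = invs (swp i p)" using m2 by simp
      ultimately show "card (invs (swp i p)) + 1 = card (invs p)" using C by simp
    qed
  qed
  show "p ! i < p ! Suc i \<Longrightarrow> inv (swp i p) = inv p + 1"
  proof -
    assume lt: "p ! i < p ! Suc i"
    have "(i, Suc i) \<notin> invs p" using lt i by (simp add: invs_def)
    moreover have "(i, Suc i) \<in> invs (swp i p)" using lt s1 i by (simp add: invs_def)
    ultimately show ?thesis using C unfolding inv_def
    proof -
      assume m2: "(i, Suc i) \<notin> invs p" and m: "(i, Suc i) \<in> invs (swp i p)"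
        and C: "card (invs (swp i p) - {(i, Suc i)}) = card (invs p - {(i, Suc i)})"
      have "card (invs (swp i p)) > 0" using m card_gt_0_iff by fastforce
      moreover have "card (invs (swp i p) - {(i, Suc i)}) = card (invs (swp i p)) - 1" using m by (simp add: card_Diff_singleton)
      moreover have "invs p - {(i, Suc i)} = invs p" using m2 by simp
      ultimately show "card (invs (swp i p)) = card (invs p) + 1" using C by simp
    qed
  qed
qed

definition P :: "nat \<Rightarrow> nat list set" where
  "P n = {p. distinct p \<and> set p = {1..n}}"

lemma P_length: "p \<in> P n \<Longrightarrow> length p = n"
  unfolding P_def using distinct_card by fastforce

lemma pl_Nil: "pl n [] = [1..<Suc n]"
  by (simp add: pl_def)

lemma pl_Cons: "pl n (a # w) = map (sw a) (pl n w)"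
  by (simp add: pl_def)

lemma length_pl[simp]: "length (pl n w) = n"
  by (simp add: pl_def)

lemma pl_nth: "k < n \<Longrightarrow> pl n w ! k = pf w (Suc k)"
  by (simp add: pl_def nth_upt del: upt_Suc)

lemma sw_image: "a \<in> S \<Longrightarrow> Suc a \<in> S \<Longrightarrow> sw a ` S = S"
proof
  assume a: "a \<in> S" "Suc a \<in> S"
  show "sw a ` S \<subseteq> S" using a by (auto simp: sw_def)
  show "S \<subseteq> sw a ` S"
  proof
    fix x assume "x \<in> S"
    then have "sw a x \<in> S" using a by (auto simp: sw_def)
    then show "x \<in> sw a ` S" by (metis image_eqI sw_sw)
  qed
qed

lemma words_Cons: "a # w \<in> words n \<longleftrightarrow> a \<in> {1..<n} \<and> w \<in> words n"
  by (simp add: words_def)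

lemma words_append: "u @ v \<in> words n \<longleftrightarrow> u \<in> words n \<and> v \<in> words n"
  by (simp add: words_def)

lemma P_map_sw: "p \<in> P n \<Longrightarrow> a \<in> {1..<n} \<Longrightarrow> map (sw a) p \<in> P n"
  unfolding P_def by (auto simp: distinct_map inj_sw inj_on_subset[OF inj_sw] sw_image)

lemma pl_P: "w \<in> words n \<Longrightarrow> pl n w \<in> P n"
proof (induction w)
  case Nil then show ?case by (simp add: pl_Nil P_def atLeastLessThanSuc_atLeastAtMost del: upt_Suc)
next
  case (Cons a w)
  then show ?case by (simp add: pl_Cons words_Cons P_map_sw)
qed

lemma P_mem: "p \<in> P n \<Longrightarrow> a \<in> {1..<n} \<Longrightarrow> a \<in> set p \<and> Suc a \<in> set p"
  by (auto simp: P_def)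

lemma sw_pred: "1 \<le> a \<Longrightarrow> Suc (sw (a - 1) k) = sw a (Suc k)"
  by (cases a) (auto simp: sw_def)

lemma pl_snoc:
  assumes "1 \<le> a" "a < n"
  shows "pl n (w @ [a]) = swp (a - 1) (pl n w)"
proof (rule nth_equalityI)
  show "length (pl n (w @ [a])) = length (swp (a - 1) (pl n w))" by simp
next
  fix k assume k: "k < length (pl n (w @ [a]))"
  then have k': "k < n" by simp
  have s: "Suc (a - 1) < length (pl n w)" using assms by simp
  have "swp (a - 1) (pl n w) ! k = pl n w ! (sw (a - 1) k)"
    using swp_nth[OF s] k' by simp
  also have "\<dots> = pf w (Suc (sw (a - 1) k))"
    using sw_lt_len[of "a - 1" n k] assms k' by (simp add: pl_nth)
  also have "\<dots> = pf w (sw a (Suc k))" by (simp only: sw_pred[OF assms(1)])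
  also have "\<dots> = pl n (w @ [a]) ! k" using k' by (simp add: pl_nth pf_append)
  finally show "pl n (w @ [a]) ! k = swp (a - 1) (pl n w) ! k" by simp
qed

lemma swp_P: "p \<in> P n \<Longrightarrow> Suc i < n \<Longrightarrow> swp i p \<in> P n"
  unfolding swp_def using P_length by (auto simp: P_def)

lemma swp_swp: "Suc i < length p \<Longrightarrow> swp i (swp i p) = p"
  by (rule nth_equalityI) (auto simp: swp_nth sw_lt_len)

lemma inv_upt: "inv [1..<Suc n] = 0"
proof -
  have "invs [1..<Suc n] = {}" by (auto simp: invs_def simp del: upt_Suc)
  then show ?thesis by (simp add: inv_def)
qed

lemma inv_le_length: "w \<in> words n \<Longrightarrow> inv (pl n w) \<le> length w"
proof (induction w)
  case Nil then show ?case using inv_upt[of n] by (simp add: pl_Nil del: upt_Suc)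
next
  case (Cons a w)
  then have a: "a \<in> {1..<n}" and w: "w \<in> words n" by (auto simp: words_Cons)
  have p: "pl n w \<in> P n" using pl_P[OF w] .
  then have d: "distinct (pl n w)" by (simp add: P_def)
  have m: "a \<in> set (pl n w)" "Suc a \<in> set (pl n w)" using P_mem[OF p a] by auto
  have "inv (map (sw a) (pl n w)) \<le> inv (pl n w) + 1"
    using inv_left[OF d m] by (cases "ldesc (pl n w) a") auto
  then show ?case using Cons(1)[OF w] by (simp add: pl_Cons)
qed

definition reduced :: "nat \<Rightarrow> nat list \<Rightarrow> bool" where
  "reduced n w \<longleftrightarrow> w \<in> words n \<and> inv (pl n w) = length w"

lemma ldesc_map_sw:
  assumes d: "distinct p" and m: "a \<in> set p" "Suc a \<in> set p"
  shows "ldesc (map (sw a) p) a \<longleftrightarrow> \<not> ldesc p a"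
proof -
  obtain i where i: "i < length p" "p ! i = a" using m(1) by (auto simp: in_set_conv_nth)
  obtain j where j: "j < length p" "p ! j = Suc a" using m(2) by (auto simp: in_set_conv_nth)
  have uniq: "\<And>k. k < length p \<Longrightarrow> p ! k = a \<Longrightarrow> k = i" "\<And>k. k < length p \<Longrightarrow> p ! k = Suc a \<Longrightarrow> k = j"
    using nth_eq_iff_index_eq[OF d _ i(1)] i(2) nth_eq_iff_index_eq[OF d _ j(1)] j(2) by auto
  have mi: "map (sw a) p ! i = Suc a" "map (sw a) p ! j = a" using i j by (simp_all add: sw_def)
  have uniq2: "\<And>k. k < length p \<Longrightarrow> map (sw a) p ! k = Suc a \<Longrightarrow> k = i"
    "\<And>k. k < length p \<Longrightarrow> map (sw a) p ! k = a \<Longrightarrow> k = j"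
  proof -
    fix k assume k: "k < length p" "map (sw a) p ! k = Suc a"
    then have "sw a (p ! k) = Suc a" by simp
    then have "p ! k = sw a (Suc a)" by (metis sw_sw)
    then have "p ! k = a" by (simp add: sw_def)
    then show "k = i" using uniq k by simp
  next
    fix k assume k: "k < length p" "map (sw a) p ! k = a"
    then have "sw a (p ! k) = a" by simp
    then have "p ! k = sw a a" by (metis sw_sw)
    then have "p ! k = Suc a" by (simp add: sw_def)
    then show "k = j" using uniq k by simp
  qed
  have L: "ldesc p a \<longleftrightarrow> j < i"
  proof
    assume "ldesc p a"
    then obtain k l where "k < l" "l < length p" "p ! k = Suc a" "p ! l = a" unfolding ldesc_def by blast
    then show "j < i" using uniq[of k] uniq[of l] by simp
  next
    assume "j < i" then show "ldesc p a" using i j unfolding ldesc_def by blast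
  qed
  have R: "ldesc (map (sw a) p) a \<longleftrightarrow> i < j"
  proof
    assume "ldesc (map (sw a) p) a"
    then obtain k l where "k < l" "l < length p" "map (sw a) p ! k = Suc a" "map (sw a) p ! l = a" unfolding ldesc_def by auto
    then show "i < j" using uniq2[of k] uniq2[of l] by simp
  next
    assume "i < j" then show "ldesc (map (sw a) p) a" using i j mi unfolding ldesc_def
      by (intro exI[of _ i] exI[of _ j]) simp
  qed
  have "i \<noteq> j" using i j by auto
  then show ?thesis using L R by auto
qed

lemma reduced_Cons:
  assumes "reduced n (a # w)"
  shows "reduced n w" "\<not> ldesc (pl n w) a" "ldesc (pl n (a # w)) a"
proof -
  have a: "a \<in> {1..<n}" and w: "w \<in> words n" using assms by (auto simp: reduced_def words_Cons)
  have p: "pl n w \<in> P n" using pl_P[OF w] .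
  then have d: "distinct (pl n w)" by (simp add: P_def)
  have m: "a \<in> set (pl n w)" "Suc a \<in> set (pl n w)" using P_mem[OF p a] by auto
  have le: "inv (pl n w) \<le> length w" using inv_le_length[OF w] .
  have e: "inv (map (sw a) (pl n w)) = Suc (length w)" using assms by (simp add: reduced_def pl_Cons)
  show nd: "\<not> ldesc (pl n w) a"
  proof
    assume "ldesc (pl n w) a"
    then have "inv (map (sw a) (pl n w)) + 1 = inv (pl n w)" using inv_left(1)[OF d m] by simp
    then show False using e le by simp
  qed
  then have "inv (map (sw a) (pl n w)) = inv (pl n w) + 1" using inv_left(2)[OF d m] by simp
  then show "reduced n w" using e w by (simp add: reduced_def)
  show "ldesc (pl n (a # w)) a" using nd ldesc_map_sw[OF d m] by (simp add: pl_Cons)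
qed

lemma reduced_snoc:
  assumes "reduced n (w @ [a])"
  shows "reduced n w" "pl n w ! (a - 1) < pl n w ! a"
proof -
  have a: "a \<in> {1..<n}" and w: "w \<in> words n" using assms by (auto simp: reduced_def words_append words_Cons)
  have p: "pl n w \<in> P n" using pl_P[OF w] .
  then have d: "distinct (pl n w)" by (simp add: P_def)
  have s: "Suc (a - 1) < length (pl n w)" using a by simp
  have le: "inv (pl n w) \<le> length w" using inv_le_length[OF w] .
  have e: "inv (swp (a - 1) (pl n w)) = Suc (length w)" using assms a by (simp add: reduced_def pl_snoc)
  have ne: "pl n w ! (a - 1) \<noteq> pl n w ! Suc (a - 1)" using d s by (simp add: nth_eq_iff_index_eq)
  have sa: "Suc (a - 1) = a" using a by simp
  show lt: "pl n w ! (a - 1) < pl n w ! a"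
  proof (rule ccontr)
    assume "\<not> pl n w ! (a - 1) < pl n w ! a"
    then have "pl n w ! Suc (a - 1) < pl n w ! (a - 1)" using ne sa by simp
    then have "inv (swp (a - 1) (pl n w)) + 1 = inv (pl n w)" using inv_right(1)[OF d s] by simp
    then show False using e le by simp
  qed
  then have "inv (swp (a - 1) (pl n w)) = inv (pl n w) + 1" using inv_right(2)[OF d s] sa by simp
  then show "reduced n w" using e w by (simp add: reduced_def)
qed

lemma inv0_sorted:
  assumes "p \<in> P n" "inv p = 0"
  shows "p = [1..<Suc n]"
proof -
  have "invs p = {}" using assms(2) by (simp add: inv_def)
  have "\<forall>i j. i < j \<longrightarrow> j < length p \<longrightarrow> p ! i \<le> p ! j"
  proof (intro allI impI)
    fix i j assume ij: "i < j" "j < length p"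
    show "p ! i \<le> p ! j"
    proof (rule ccontr)
      assume "\<not> p ! i \<le> p ! j"
      then have "(i, j) \<in> invs p" using ij by (simp add: invs_def)
      with \<open>invs p = {}\<close> show False by simp
    qed
  qed
  then have "sorted p" by (simp add: sorted_iff_nth_mono_less)
  moreover have "distinct p" "set p = set [1..<Suc n]" using assms(1)
    by (auto simp: P_def atLeastLessThanSuc_atLeastAtMost simp del: upt_Suc)
  ultimately show ?thesis by (intro sorted_distinct_set_unique) (simp_all del: upt_Suc)
qed

lemma exists_reduced: "p \<in> P n \<Longrightarrow> \<exists>w. reduced n w \<and> pl n w = p"
proof (induction "inv p" arbitrary: p rule: less_induct)
  case less
  show ?case
  proof (cases "inv p = 0")
    case True
    then have "p = [1..<Suc n]" using inv0_sorted less(2) by simp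
    then show ?thesis using True by (intro exI[of _ "[]"]) (simp add: reduced_def words_def pl_Nil del: upt_Suc)
  next
    case False
    have lp: "length p = n" using P_length[OF less(2)] .
    have d: "distinct p" using less(2) by (simp add: P_def)
    have "\<exists>i. Suc i < n \<and> p ! Suc i < p ! i"
    proof (rule ccontr)
      assume "\<not> ?thesis"
      then have "\<forall>i. Suc i < length p \<longrightarrow> p ! i \<le> p ! Suc i" using lp by auto
      then have "sorted p" by (simp add: sorted_iff_nth_Suc)
      moreover have "distinct p" "set p = set [1..<Suc n]" using less(2)
        by (auto simp: P_def atLeastLessThanSuc_atLeastAtMost simp del: upt_Suc)
      ultimately have "p = [1..<Suc n]" by (intro sorted_distinct_set_unique) (simp_all del: upt_Suc)
      then show False using False inv_upt by simp
    qed
    then obtain i where i: "Suc i < n" "p ! Suc i < p ! i" by blast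
    let ?q = "swp i p"
    have q: "?q \<in> P n" using swp_P[OF less(2) i(1)] .
    have e: "inv ?q + 1 = inv p" using inv_right(1)[OF d] i lp by simp
    then obtain w where w: "reduced n w" "pl n w = ?q" using less(1)[OF _ q] by fastforce
    have "pl n (w @ [Suc i]) = swp i ?q" using pl_snoc[of "Suc i" n w] i w by simp
    also have "\<dots> = p" using swp_swp i lp by simp
    finally have "pl n (w @ [Suc i]) = p" .
    moreover have "reduced n (w @ [Suc i])"
      using w e \<open>pl n (w @ [Suc i]) = p\<close> i by (auto simp: reduced_def words_append words_def)
    ultimately show ?thesis by blast
  qed
qed

lemma exists_reduced_ldesc:
  assumes p: "p \<in> P n" and a: "a \<in> {1..<n}" and l: "ldesc p a"
  shows "\<exists>w. reduced n (a # w) \<and> pl n (a # w) = p"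
proof -
  have d: "distinct p" using p by (simp add: P_def)
  have m: "a \<in> set p" "Suc a \<in> set p" using P_mem[OF p a] by auto
  let ?q = "map (sw a) p"
  have q: "?q \<in> P n" using P_map_sw[OF p a] .
  have e: "inv ?q + 1 = inv p" using inv_left(1)[OF d m l] .
  obtain w where w: "reduced n w" "pl n w = ?q" using exists_reduced[OF q] by blast
  have pa: "pl n (a # w) = p" using w by (simp add: pl_Cons comp_def)
  have "reduced n (a # w)" using w e pa a by (auto simp: reduced_def words_Cons)
  then show ?thesis using pa by blast
qed

lemma exists_reduced_rdesc:
  assumes p: "p \<in> P n" and a: "a \<in> {1..<n}" and l: "p ! a < p ! (a - 1)"
  shows "\<exists>w. reduced n (w @ [a]) \<and> pl n (w @ [a]) = p"
proof -
  have lp: "length p = n" using P_length[OF p] .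
  have d: "distinct p" using p by (simp add: P_def)
  have s: "Suc (a - 1) < length p" using a lp by simp
  have sa: "Suc (a - 1) = a" using a by simp
  let ?q = "swp (a - 1) p"
  have q: "?q \<in> P n" using swp_P[OF p] s lp by simp
  have e: "inv ?q + 1 = inv p" using inv_right(1)[OF d s] l sa by simp
  obtain w where w: "reduced n w" "pl n w = ?q" using exists_reduced[OF q] by blast
  have pa: "pl n (w @ [a]) = p" using w pl_snoc[of a n w] a swp_swp[OF s] by simp
  have "reduced n (w @ [a])" using w e pa a by (auto simp: reduced_def words_append words_def)
  then show ?thesis using pa by blast
qed

lemma nth_inj: "distinct p \<Longrightarrow> i < length p \<Longrightarrow> j < length p \<Longrightarrow> p ! i = p ! j \<Longrightarrow> i = j"
  by (simp add: nth_eq_iff_index_eq)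

lemma ldesc_pos:
  assumes "distinct p" "i < length p" "j < length p" "p ! i = a" "p ! j = Suc a"
  shows "ldesc p a \<longleftrightarrow> j < i"
proof
  assume "ldesc p a"
  then obtain k l where kl: "k < l" "l < length p" "p ! k = Suc a" "p ! l = a" unfolding ldesc_def by blast
  have "k = j" by (rule nth_inj[OF assms(1)]) (use kl assms in simp_all)
  moreover have "l = i" by (rule nth_inj[OF assms(1)]) (use kl assms in simp_all)
  ultimately show "j < i" using kl by simp
next
  assume "j < i" then show "ldesc p a" unfolding ldesc_def using assms
    by (intro exI[of _ j] exI[of _ i]) simp
qed

lemma pos_exists: "x \<in> set p \<Longrightarrow> \<exists>i. i < length p \<and> p ! i = x"
  by (simp add: in_set_conv_nth)

lemma P_mem1: "p \<in> P n \<Longrightarrow> a \<in> {1..<n} \<Longrightarrow> a \<in> set p"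
  using P_mem by blast

lemma P_mem2: "p \<in> P n \<Longrightarrow> a \<in> {1..<n} \<Longrightarrow> Suc a \<in> set p"
  using P_mem by blast

lemma distinct_map_sw: "distinct p \<Longrightarrow> distinct (map (sw a) p)"
  by (simp add: distinct_map inj_on_subset[OF inj_sw subset_UNIV])

lemma ldesc_far:
  assumes p: "p \<in> P n" and a: "a \<in> {1..<n}" and c: "c \<in> {1..<n}" and far: "a \<ge> c + 2 \<or> c \<ge> a + 2"
  shows "ldesc (map (sw a) p) c \<longleftrightarrow> ldesc p c"
proof -
  have d: "distinct p" using p by (simp add: P_def)
  have dq: "distinct (map (sw a) p)" using distinct_map_sw[OF d] .
  obtain i where i: "i < length p" "p ! i = c" using pos_exists[OF P_mem1[OF p c]] by blast
  obtain j where j: "j < length p" "p ! j = Suc c" using pos_exists[OF P_mem2[OF p c]] by blast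
  have s: "sw a c = c" "sw a (Suc c) = Suc c" using far unfolding sw_def by auto
  have q: "map (sw a) p ! i = c" "map (sw a) p ! j = Suc c" using i j s by simp_all
  have "ldesc (map (sw a) p) c \<longleftrightarrow> j < i"
    by (rule ldesc_pos[OF dq]) (use i j q in simp_all)
  moreover have "ldesc p c \<longleftrightarrow> j < i" by (rule ldesc_pos[OF d i(1) j(1) i(2) j(2)])
  ultimately show ?thesis by simp
qed

lemma ldesc_adj:
  assumes p: "p \<in> P n" and a: "a \<in> {1..<n}" and c: "c \<in> {1..<n}" and adj: "a = c + 1 \<or> c = a + 1"
    and la: "ldesc p a" and lc: "ldesc p c"
  shows "ldesc (map (sw a) p) c" "ldesc (map (sw c) (map (sw a) p)) a"
proof -
  have d: "distinct p" using p by (simp add: P_def)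
  have dq: "distinct (map (sw a) p)" using distinct_map_sw[OF d] .
  have dq2: "distinct (map (sw c) (map (sw a) p))" using distinct_map_sw[OF dq] .
  obtain ia where ia: "ia < length p" "p ! ia = a" using pos_exists[OF P_mem1[OF p a]] by blast
  obtain ia' where ia': "ia' < length p" "p ! ia' = Suc a" using pos_exists[OF P_mem2[OF p a]] by blast
  obtain ic where ic: "ic < length p" "p ! ic = c" using pos_exists[OF P_mem1[OF p c]] by blast
  obtain ic' where ic': "ic' < length p" "p ! ic' = Suc c" using pos_exists[OF P_mem2[OF p c]] by blast
  have A: "ia' < ia" using ldesc_pos[OF d ia(1) ia'(1) ia(2) ia'(2)] la by simp
  have B: "ic' < ic" using ldesc_pos[OF d ic(1) ic'(1) ic(2) ic'(2)] lc by simp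
  have "ldesc (map (sw a) p) c \<and> ldesc (map (sw c) (map (sw a) p)) a"
    using adj
  proof
    assume ac: "a = c + 1"
    have e1: "ia = ic'" by (rule nth_inj[OF d ia(1) ic'(1)]) (use ia ic' ac in simp)
    have s1: "sw a a = c + 2" "sw a (Suc a) = c + 1" "sw a c = c" using ac unfolding sw_def by auto
    have s2: "sw c (c + 2) = c + 2" "sw c (c + 1) = c" "sw c c = c + 1" unfolding sw_def by auto
    have q1: "map (sw a) p ! ic = c" "map (sw a) p ! ia' = Suc c"
      using ic ia' s1 ac by simp_all
    have L1: "ldesc (map (sw a) p) c \<longleftrightarrow> ia' < ic"
      by (rule ldesc_pos[OF dq]) (use ic ia' q1 in simp_all)
    have r1: "map (sw c) (map (sw a) p) ! ic = a" "map (sw c) (map (sw a) p) ! ia = Suc a"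
      using ic ia s1 s2 ac by simp_all
    have L2: "ldesc (map (sw c) (map (sw a) p)) a \<longleftrightarrow> ia < ic"
      by (rule ldesc_pos[OF dq2]) (use ic ia r1 in simp_all)
    show ?thesis using L1 L2 A B e1 by simp
  next
    assume ca: "c = a + 1"
    have e1: "ia' = ic" by (rule nth_inj[OF d ia'(1) ic(1)]) (use ia' ic ca in simp)
    have s1: "sw a a = c" "sw a c = a" "sw a (Suc c) = Suc c" using ca unfolding sw_def by auto
    have s2: "sw c c = Suc c" "sw c a = a" "sw c (Suc c) = c" using ca unfolding sw_def by auto
    have q1: "map (sw a) p ! ia = c" "map (sw a) p ! ic' = Suc c"
      using ia ic' s1 by simp_all
    have L1: "ldesc (map (sw a) p) c \<longleftrightarrow> ic' < ia"
      by (rule ldesc_pos[OF dq]) (use ia ic' q1 in simp_all)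
    have r1: "map (sw c) (map (sw a) p) ! ia' = a" "map (sw c) (map (sw a) p) ! ic' = Suc a"
      using ia' ic' s1 s2 ca e1 ic by simp_all
    have L2: "ldesc (map (sw c) (map (sw a) p)) a \<longleftrightarrow> ic' < ia'"
      by (rule ldesc_pos[OF dq2]) (use ia' ic' r1 in simp_all)
    show ?thesis using L1 L2 A B e1 by simp
  qed
  then show "ldesc (map (sw a) p) c" "ldesc (map (sw c) (map (sw a) p)) a" by simp_all
qed

lemma reduced_suffix: "reduced n (x @ y) \<Longrightarrow> reduced n y"
  by (induction x) (auto dest: reduced_Cons(1))

lemma reduced_by_length: "w \<in> words n \<Longrightarrow> length w = inv (pl n w) \<Longrightarrow> reduced n w"
  by (simp add: reduced_def)

lemma reduced_length_eq: "reduced n v \<Longrightarrow> reduced n w \<Longrightarrow> pl n v = pl n w \<Longrightarrow> length v = length w"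
  by (metis reduced_def)

lemma map_sw_inv: "map (sw a) q = p \<Longrightarrow> q = map (sw a) p"
  by (auto simp: comp_def)

lemma pf_sw3: "a = c + 1 \<or> c = a + 1 \<Longrightarrow> sw a (sw c (sw a x)) = sw c (sw a (sw c x))"
  by (auto simp: sw_def)

lemma pf_sw2: "a \<ge> c + 2 \<or> c \<ge> a + 2 \<Longrightarrow> sw a (sw c x) = sw c (sw a x)"
  by (auto simp: sw_def)

theorem matsumoto:
  "reduced n v \<Longrightarrow> reduced n w \<Longrightarrow> pl n v = pl n w \<Longrightarrow> braid_eq v w"
proof (induction "length v" arbitrary: v w rule: less_induct)
  case less
  show ?case
  proof (cases v)
    case Nil
    then have "w = []" using reduced_length_eq[OF less(2,3,4)] by simp
    then show ?thesis using Nil by simp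
  next
    case (Cons a v')
    obtain c w' where w: "w = c # w'" using reduced_length_eq[OF less(2,3,4)] Cons by (cases w) auto
    define p where "p = pl n v"
    have pP: "p \<in> P n" using less(2) pl_P by (simp add: p_def reduced_def)
    have a: "a \<in> {1..<n}" using less(2) Cons by (simp add: reduced_def words_Cons)
    have c: "c \<in> {1..<n}" using less(3) w by (simp add: reduced_def words_Cons)
    have rv': "reduced n v'" using reduced_Cons(1) less(2) Cons by simp
    have rw': "reduced n w'" using reduced_Cons(1) less(3) w by simp
    have la: "ldesc p a" using reduced_Cons(3) less(2) Cons p_def by simp
    have lb: "ldesc p c" using reduced_Cons(3) less(3) w less(4) p_def by simp
    have pv': "pl n v' = map (sw a) p" using Cons p_def by (simp add: pl_Cons comp_def)
    have pw': "pl n w' = map (sw c) p" using w less(4) p_def by (simp add: pl_Cons comp_def)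
    have lenv: "length v = inv p" using less(2) by (simp add: reduced_def p_def)
    have d: "distinct p" using pP by (simp add: P_def)
    have ma: "a \<in> set p" "Suc a \<in> set p" using P_mem[OF pP a] by auto
    have mb: "c \<in> set p" "Suc c \<in> set p" using P_mem[OF pP c] by auto
    have IH: "\<And>x y. length x < length v \<Longrightarrow> reduced n x \<Longrightarrow> reduced n y \<Longrightarrow> pl n x = pl n y \<Longrightarrow> braid_eq x y"
      using less(1) by blast
    consider "a = c" | "a \<ge> c + 2 \<or> c \<ge> a + 2" | "a = c + 1 \<or> c = a + 1" by linarith
    then show ?thesis
    proof cases
      case 1
      then have "braid_eq v' w'" using IH[OF _ rv' rw'] Cons pv' pw' by simp
      then show ?thesis using Cons w 1 by (simp add: braid_eq_Cons)
    next
      case 2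
      have "ldesc (map (sw a) p) c" using ldesc_far[OF pP a c 2] lb by simp
      then obtain t where t: "reduced n (c # t)" "pl n (c # t) = map (sw a) p"
        using exists_reduced_ldesc[OF P_map_sw[OF pP a] c] by blast
      have ql: "inv (map (sw a) p) + 1 = inv p" using inv_left(1)[OF d ma la] .
      have tw: "t \<in> words n" using t(1) by (simp add: reduced_def words_Cons)
      have r1: "reduced n (a # c # t)"
      proof (rule reduced_by_length)
        show "a # c # t \<in> words n" using a c tw by (simp add: words_Cons)
        have "pl n (a # c # t) = p" using t(2) by (simp add: pl_Cons[of n a] comp_def)
        then show "length (a # c # t) = inv (pl n (a # c # t))" using t ql by (simp add: reduced_def)
      qed
      have pe: "pl n (c # a # t) = pl n (a # c # t)"
        using pf_sw2[OF 2] by (simp add: pl_def)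
      have r2: "reduced n (c # a # t)"
        using r1 pe c a tw by (simp add: reduced_def words_Cons)
      have e1: "braid_eq v' (c # t)"
        using IH[OF _ rv' t(1)] Cons pv' t(2) by simp
      have e2: "braid_eq w' (a # t)"
      proof (rule IH[OF _ rw' reduced_Cons(1)[OF r2]])
        show "length w' < length v" using reduced_length_eq[OF less(2,3,4)] w by simp
        have "pl n (c # a # t) = p" using pe r1 t(2) by (simp add: pl_Cons[of n a] comp_def)
        then have "map (sw c) (pl n (a # t)) = p" by (simp add: pl_Cons[of n c])
        then have "pl n (a # t) = map (sw c) p" by (rule map_sw_inv)
        then show "pl n w' = pl n (a # t)" using pw' by simp
      qed
      have "braid_eq v (a # c # t)" using Cons e1 by (simp add: braid_eq_Cons)
      moreover have "braid_eq (a # c # t) (c # a # t)" using braid_eq_comm 2 by simp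
      moreover have "braid_eq (c # a # t) w" using w e2 by (simp add: braid_eq_Cons braid_eq_sym)
      ultimately show ?thesis using braid_eq_trans by blast
    next
      case 3
      have l1: "ldesc (map (sw a) p) c" and l2: "ldesc (map (sw c) (map (sw a) p)) a"
        using ldesc_adj[OF pP a c 3 la lb] by auto
      have q1P: "map (sw a) p \<in> P n" using P_map_sw[OF pP a] .
      have q2P: "map (sw c) (map (sw a) p) \<in> P n" using P_map_sw[OF q1P c] .
      obtain t where t: "reduced n (a # t)" "pl n (a # t) = map (sw c) (map (sw a) p)"
        using exists_reduced_ldesc[OF q2P a l2] by blast
      have tw: "t \<in> words n" using t(1) by (simp add: reduced_def words_Cons)
      have dq1: "distinct (map (sw a) p)" using q1P by (simp add: P_def)
      have i1: "inv (map (sw a) p) + 1 = inv p" using inv_left(1)[OF d ma la] .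
      have i2: "inv (map (sw c) (map (sw a) p)) + 1 = inv (map (sw a) p)"
        using inv_left(1)[OF dq1 _ _ l1] P_mem[OF q1P c] by auto
      have pbat: "pl n (c # a # t) = map (sw a) p" using t(2) by (simp add: pl_Cons comp_def)
      have pabat: "pl n (a # c # a # t) = p" using pbat by (simp add: pl_Cons[of n a] comp_def)
      have r1: "reduced n (a # c # a # t)"
      proof (rule reduced_by_length)
        show "a # c # a # t \<in> words n" using a c tw by (simp add: words_Cons)
        show "length (a # c # a # t) = inv (pl n (a # c # a # t))"
          using pabat t i1 i2 by (simp add: reduced_def)
      qed
      have pe: "pl n (c # a # c # t) = pl n (a # c # a # t)"
        using pf_sw3[OF 3] by (simp add: pl_def)
      have r2: "reduced n (c # a # c # t)"
        using r1 pe c a tw by (simp add: reduced_def words_Cons)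
      have e1: "braid_eq v' (c # a # t)"
        using IH[OF _ rv' reduced_Cons(1)[OF r1]] Cons pv' pbat by simp
      have e2: "braid_eq w' (a # c # t)"
      proof (rule IH[OF _ rw' reduced_Cons(1)[OF r2]])
        show "length w' < length v" using reduced_length_eq[OF less(2,3,4)] w by simp
        have "pl n (c # a # c # t) = p" using pe pabat by simp
        then have "map (sw c) (pl n (a # c # t)) = p" by (simp add: pl_Cons[of n c])
        then have "pl n (a # c # t) = map (sw c) p" by (rule map_sw_inv)
        then show "pl n w' = pl n (a # c # t)" using pw' by simp
      qed
      have "braid_eq v (a # c # a # t)" using Cons e1 by (simp add: braid_eq_Cons)
      moreover have "braid_eq (a # c # a # t) (c # a # c # t)" using braid_eq_braid 3 by simp
      moreover have "braid_eq (c # a # c # t) w" using w e2 by (simp add: braid_eq_Cons braid_eq_sym)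
      ultimately show ?thesis using braid_eq_trans by blast
    qed
  qed
qed

definition F :: "nat \<Rightarrow> nat \<Rightarrow> nat" where
  "F m k = (if 1 \<le> k \<and> k \<le> m then Suc k else if k = Suc m then 1 else k)"

lemma pf_upt: "pf [1..<Suc m] = F m"
proof (induction m)
  case 0 then show ?case by (auto simp: F_def fun_eq_iff)
next
  case (Suc m)
  have "[1..<Suc (Suc m)] = [1..<Suc m] @ [Suc m]" by simp
  then have "pf [1..<Suc (Suc m)] = F m \<circ> sw (Suc m)" using Suc by (simp add: pf_append del: upt_Suc)
  then show ?case by (auto simp: F_def sw_def fun_eq_iff)
qed

lemma pf_upt': "pf [Suc 0..<Suc m] = F m"
  using pf_upt by simp

definition G :: "nat \<Rightarrow> nat \<Rightarrow> nat" where
  "G m k = (if 1 \<le> k \<and> k \<le> m then Suc m - k else k)"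

lemma pf_Delta: "pf (Delta m) = G m"
proof (induction m)
  case 0 then show ?case by (auto simp: G_def fun_eq_iff)
next
  case (Suc m)
  have "pf (Delta (Suc m)) = F m \<circ> G m" using Suc by (simp add: pf_append pf_upt' del: upt_Suc)
  then show ?case by (auto simp: F_def G_def fun_eq_iff)
qed

lemma Delta_words: "m \<le> n \<Longrightarrow> Delta m \<in> words n"
  by (induction m) (auto simp: words_def)

lemma length_Delta: "length (Delta m) = card {(k, l). k < l \<and> l < m}"
proof (induction m)
  case 0 then show ?case by simp
next
  case (Suc m)
  have e: "{(k, l). k < l \<and> l < Suc m} = {(k, l). k < l \<and> l < m} \<union> ({..<m} \<times> {m})" by auto
  have f: "finite {(k, l). k < l \<and> l < m}"
    by (rule finite_subset[of _ "{..<m} \<times> {..<m}"]) auto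
  have "card {(k, l). k < l \<and> l < Suc m} = card {(k, l). k < l \<and> l < m} + card ({..<m} \<times> {m})"
    unfolding e by (rule card_Un_disjoint) (use f in auto)
  then show ?case using Suc by simp
qed

lemma pl_Delta_nth: "m \<le> n \<Longrightarrow> k < n \<Longrightarrow> pl n (Delta m) ! k = (if k < m then m - k else Suc k)"
  by (simp add: pl_nth pf_Delta G_def)

lemma inv_Delta: "m \<le> n \<Longrightarrow> inv (pl n (Delta m)) = length (Delta m)"
proof -
  assume m: "m \<le> n"
  have "invs (pl n (Delta m)) = {(k, l). k < l \<and> l < m}"
    using m by (auto simp: invs_def pl_Delta_nth split: if_splits)
  then show ?thesis by (simp add: inv_def length_Delta)
qed

lemma reduced_Delta: "m \<le> n \<Longrightarrow> reduced n (Delta m)"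
  by (simp add: reduced_def Delta_words inv_Delta)

lemma pl_Delta_rev: "pl n (Delta n) = rev [1..<Suc n]"
  by (rule nth_equalityI) (auto simp: pl_Delta_nth rev_nth nth_upt simp del: upt_Suc)

lemma inv_le_max: "p \<in> P n \<Longrightarrow> inv p \<le> length (Delta n)"
proof -
  assume p: "p \<in> P n"
  have "invs p \<subseteq> {(k, l). k < l \<and> l < n}" using P_length[OF p] by (auto simp: invs_def)
  moreover have "finite {(k, l). k < l \<and> l < n}"
    by (rule finite_subset[of _ "{..<n} \<times> {..<n}"]) auto
  ultimately show ?thesis unfolding inv_def length_Delta by (rule card_mono[rotated])
qed

lemma inv_append_le: "w @ c \<in> words n \<Longrightarrow> inv (pl n (w @ c)) \<le> inv (pl n w) + length c"
proof (induction c rule: rev_induct)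
  case Nil then show ?case by simp
next
  case (snoc a c)
  then have a: "a \<in> {1..<n}" and wc: "w @ c \<in> words n" by (auto simp: words_def)
  have p: "pl n (w @ c) \<in> P n" using pl_P[OF wc] .
  have d: "distinct (pl n (w @ c))" using p by (simp add: P_def)
  have s: "Suc (a - 1) < length (pl n (w @ c))" using a by simp
  have ne: "pl n (w @ c) ! (a - 1) \<noteq> pl n (w @ c) ! Suc (a - 1)" using d s by (simp add: nth_eq_iff_index_eq)
  have "inv (swp (a - 1) (pl n (w @ c))) \<le> inv (pl n (w @ c)) + 1"
    using inv_right[OF d s] ne by (cases "pl n (w @ c) ! (a - 1) < pl n (w @ c) ! Suc (a - 1)") auto
  moreover have "pl n ((w @ c) @ [a]) = swp (a - 1) (pl n (w @ c))" using pl_snoc[of a n "w @ c"] a by simp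
  ultimately show ?case using snoc(1)[OF wc] by simp
qed

lemma reduced_prefix: "reduced n (w @ c) \<Longrightarrow> reduced n w"
proof -
  assume r: "reduced n (w @ c)"
  then have wc: "w @ c \<in> words n" by (simp add: reduced_def)
  then have w: "w \<in> words n" by (simp add: words_append)
  have "length w + length c \<le> inv (pl n w) + length c" using inv_append_le[OF wc] r by (simp add: reduced_def)
  then show ?thesis using inv_le_length[OF w] w by (simp add: reduced_def)
qed

lemma desc_free_rev:
  assumes p: "p \<in> P n" and nd: "\<forall>i. Suc i < n \<longrightarrow> p ! Suc i < p ! i"
  shows "p = rev [1..<Suc n]"
proof -
  have lp: "length p = n" using P_length[OF p] .
  have "sorted (rev p)"
    unfolding sorted_iff_nth_Suc
  proof (intro allI impI)
    fix i assume i: "Suc i < length (rev p)"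
    have "rev p ! i = p ! (n - Suc i)" "rev p ! Suc i = p ! (n - Suc (Suc i))"
      using i lp by (simp_all add: rev_nth)
    moreover have "Suc (n - Suc (Suc i)) = n - Suc i" using i lp by simp
    moreover have "p ! Suc (n - Suc (Suc i)) < p ! (n - Suc (Suc i))"
      using nd i lp by simp
    ultimately show "rev p ! i \<le> rev p ! Suc i" by simp
  qed
  moreover have "distinct (rev p)" "set (rev p) = set [1..<Suc n]" using p
    by (auto simp: P_def atLeastLessThanSuc_atLeastAtMost simp del: upt_Suc)
  ultimately have "rev p = [1..<Suc n]" by (intro sorted_distinct_set_unique) (simp_all del: upt_Suc)
  then show ?thesis by (metis rev_rev_ident)
qed

lemma extend_reduced: "reduced n w \<Longrightarrow> \<exists>c. reduced n (w @ c) \<and> pl n (w @ c) = pl n (Delta n)"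
proof (induction "length (Delta n) - length w" arbitrary: w rule: less_induct)
  case less
  have w: "w \<in> words n" using less(2) by (simp add: reduced_def)
  have p: "pl n w \<in> P n" using pl_P[OF w] .
  have d: "distinct (pl n w)" using p by (simp add: P_def)
  show ?case
  proof (cases "\<exists>i. Suc i < n \<and> pl n w ! i < pl n w ! Suc i")
    case True
    then obtain i where i: "Suc i < n" "pl n w ! i < pl n w ! Suc i" by blast
    have s: "Suc i < length (pl n w)" using i by simp
    have e: "inv (swp i (pl n w)) = inv (pl n w) + 1" using inv_right(2)[OF d s i(2)] .
    have ps: "pl n (w @ [Suc i]) = swp i (pl n w)" using pl_snoc[of "Suc i" n w] i by simp
    have r: "reduced n (w @ [Suc i])"
      using less(2) e ps i by (simp add: reduced_def words_append words_def)
    have "inv (pl n (w @ [Suc i])) \<le> length (Delta n)"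
      by (rule inv_le_max[OF pl_P]) (use r in \<open>simp add: reduced_def\<close>)
    then have "length (Delta n) - length (w @ [Suc i]) < length (Delta n) - length w"
      using r by (simp add: reduced_def)
    then obtain c where "reduced n ((w @ [Suc i]) @ c) \<and> pl n ((w @ [Suc i]) @ c) = pl n (Delta n)"
      using less(1) r by blast
    then show ?thesis by (intro exI[of _ "[Suc i] @ c"]) simp
  next
    case False
    then have "\<forall>i. Suc i < n \<longrightarrow> pl n w ! Suc i < pl n w ! i"
      using d by (metis nth_eq_iff_index_eq length_pl Suc_lessD n_not_Suc_n linorder_neqE_nat)
    then have "pl n w = pl n (Delta n)" using desc_free_rev[OF p] pl_Delta_rev by simp
    then show ?thesis using less(2) by (intro exI[of _ "[]"]) simp
  qed
qed

lemma simples_iff: "x \<in> simples n \<longleftrightarrow> (\<exists>w. reduced n w \<and> x = cls n w)"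
proof
  assume "x \<in> simples n"
  then obtain w c where w: "w \<in> words n" "x = cls n w" "c \<in> words n" "braid_eq (w @ c) (Delta n)"
    by (auto simp: simples_def left_div_def)
  have "reduced n (w @ c)"
  proof (rule reduced_by_length)
    show "w @ c \<in> words n" using w by (simp add: words_append)
    have "length (w @ c) = length (Delta n)" using braid_eq_length[OF w(4)] .
    also have "\<dots> = inv (pl n (Delta n))" using inv_Delta by simp
    also have "\<dots> = inv (pl n (w @ c))" using braid_eq_pl[OF w(4)] by simp
    finally show "length (w @ c) = inv (pl n (w @ c))" .
  qed
  then show "\<exists>w. reduced n w \<and> x = cls n w" using reduced_prefix w(2) by blast
next
  assume "\<exists>w. reduced n w \<and> x = cls n w"
  then obtain w where w: "reduced n w" "x = cls n w" by blast
  obtain c where c: "reduced n (w @ c)" "pl n (w @ c) = pl n (Delta n)" using extend_reduced[OF w(1)] by blast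
  have "braid_eq (w @ c) (Delta n)" using matsumoto[OF c(1) reduced_Delta c(2)] by simp
  moreover have "c \<in> words n" "w \<in> words n" using c(1) by (auto simp: reduced_def words_append)
  ultimately show "x \<in> simples n" using w(2) by (auto simp: simples_def left_div_def)
qed

lemma cls_mem: "u \<in> cls n w \<longleftrightarrow> u \<in> words n \<and> braid_eq u w"
  by (simp add: cls_def)

lemma cls_self: "w \<in> words n \<Longrightarrow> w \<in> cls n w"
  by (simp add: cls_def)

lemma cls_eq: "v \<in> words n \<Longrightarrow> w \<in> words n \<Longrightarrow> cls n v = cls n w \<longleftrightarrow> braid_eq v w"
proof
  assume "v \<in> words n" "w \<in> words n" "cls n v = cls n w"
  then have "v \<in> cls n w" using cls_self by blast
  then show "braid_eq v w" by (simp add: cls_def)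
next
  assume "braid_eq v w"
  then show "cls n v = cls n w" by (auto simp: cls_def intro: braid_eq_trans braid_eq_sym)
qed

definition Phi :: "nat \<Rightarrow> nat list set \<Rightarrow> nat list" where
  "Phi n x = pl n (SOME w. w \<in> x)"

lemma Phi_cls: "w \<in> words n \<Longrightarrow> Phi n (cls n w) = pl n w"
proof -
  assume w: "w \<in> words n"
  have "(SOME u. u \<in> cls n w) \<in> cls n w" using cls_self[OF w] by (rule someI)
  then have "braid_eq (SOME u. u \<in> cls n w) w" by (simp add: cls_def)
  then show ?thesis by (simp add: Phi_def braid_eq_pl)
qed

lemma DL_cls:
  assumes r: "reduced n w"
  shows "DL n (cls n w) = {i \<in> {1..<n}. ldesc (pl n w) i}"
proof
  have w: "w \<in> words n" using r by (simp add: reduced_def)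
  show "DL n (cls n w) \<subseteq> {i \<in> {1..<n}. ldesc (pl n w) i}"
  proof
    fix i assume "i \<in> DL n (cls n w)"
    then obtain w' c where i: "i \<in> {1..<n}" and w': "w' \<in> cls n w" and c: "c \<in> words n" "braid_eq ([i] @ c) w'"
      by (auto simp: DL_def left_div_def)
    have e: "braid_eq (i # c) w" using c w' by (auto simp: cls_def intro: braid_eq_trans)
    have "reduced n (i # c)"
    proof (rule reduced_by_length)
      show "i # c \<in> words n" using i c by (simp add: words_Cons)
      show "length (i # c) = inv (pl n (i # c))"
        using braid_eq_length[OF e] braid_eq_pl[OF e] r by (simp add: reduced_def)
    qed
    then have "ldesc (pl n (i # c)) i" by (rule reduced_Cons(3))
    then show "i \<in> {i \<in> {1..<n}. ldesc (pl n w) i}" using braid_eq_pl[OF e] i by simp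
  qed
  show "{i \<in> {1..<n}. ldesc (pl n w) i} \<subseteq> DL n (cls n w)"
  proof
    fix i assume i: "i \<in> {i \<in> {1..<n}. ldesc (pl n w) i}"
    obtain t where t: "reduced n (i # t)" "pl n (i # t) = pl n w"
      using exists_reduced_ldesc[OF pl_P[OF w]] i by blast
    have "braid_eq (i # t) w" using matsumoto[OF t(1) r t(2)] .
    moreover have "t \<in> words n" using t(1) by (simp add: reduced_def words_Cons)
    ultimately show "i \<in> DL n (cls n w)" using i cls_self[OF w]
      unfolding DL_def left_div_def by auto
  qed
qed

lemma DR_cls:
  assumes r: "reduced n w"
  shows "DR n (cls n w) = {i \<in> {1..<n}. pl n w ! i < pl n w ! (i - 1)}"
proof
  have w: "w \<in> words n" using r by (simp add: reduced_def)
  show "DR n (cls n w) \<subseteq> {i \<in> {1..<n}. pl n w ! i < pl n w ! (i - 1)}"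
  proof
    fix i assume "i \<in> DR n (cls n w)"
    then obtain w' c where i: "i \<in> {1..<n}" and w': "w' \<in> cls n w" and c: "c \<in> words n" "braid_eq (c @ [i]) w'"
      by (auto simp: DR_def right_div_def)
    have e: "braid_eq (c @ [i]) w" using c w' by (auto simp: cls_def intro: braid_eq_trans)
    have rr: "reduced n (c @ [i])"
    proof (rule reduced_by_length)
      show "c @ [i] \<in> words n" using i c by (simp add: words_append words_def)
      show "length (c @ [i]) = inv (pl n (c @ [i]))"
        using braid_eq_length[OF e] braid_eq_pl[OF e] r by (simp add: reduced_def)
    qed
    have lt: "pl n c ! (i - 1) < pl n c ! i" using reduced_snoc(2)[OF rr] .
    have ps: "pl n (c @ [i]) = swp (i - 1) (pl n c)" using pl_snoc i by simp
    have s: "Suc (i - 1) < length (pl n c)" using i by simp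
    obtain j where j: "i = Suc j" using i by (cases i) auto
    have "sw j (Suc j) = j" "sw j j = Suc j" by (simp_all add: sw_def)
    then have "pl n (c @ [i]) ! i = pl n c ! (i - 1)" "pl n (c @ [i]) ! (i - 1) = pl n c ! i"
      using ps swp_nth[OF s] i j by simp_all
    then show "i \<in> {i \<in> {1..<n}. pl n w ! i < pl n w ! (i - 1)}"
      using braid_eq_pl[OF e] lt i by simp
  qed
  show "{i \<in> {1..<n}. pl n w ! i < pl n w ! (i - 1)} \<subseteq> DR n (cls n w)"
  proof
    fix i assume i: "i \<in> {i \<in> {1..<n}. pl n w ! i < pl n w ! (i - 1)}"
    obtain t where t: "reduced n (t @ [i])" "pl n (t @ [i]) = pl n w"
      using exists_reduced_rdesc[OF pl_P[OF w]] i by blast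
    have "braid_eq (t @ [i]) w" using matsumoto[OF t(1) r t(2)] .
    moreover have "t \<in> words n" using t(1) by (simp add: reduced_def words_append)
    ultimately show "i \<in> DR n (cls n w)" using i cls_self[OF w]
      unfolding DR_def right_div_def by auto
  qed
qed

definition LD :: "nat \<Rightarrow> nat list \<Rightarrow> nat set" where
  "LD n p = {i \<in> {1..<n}. ldesc p i}"

definition RD :: "nat \<Rightarrow> nat list \<Rightarrow> nat set" where
  "RD n p = {i \<in> {1..<n}. p ! i < p ! (i - 1)}"

definition Tup :: "nat \<Rightarrow> nat list list set" where
  "Tup n = {ps. length ps = 4 \<and> set ps \<subseteq> P n \<and>
     (\<forall>k. Suc k < length ps \<longrightarrow> LD n (ps ! Suc k) \<subseteq> RD n (ps ! k)) \<and> last ps = pl n (Delta (n - 1))}"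

lemma simple_props:
  assumes "x \<in> simples n"
  shows "Phi n x \<in> P n" "DL n x = LD n (Phi n x)" "DR n x = RD n (Phi n x)"
proof -
  obtain w where w: "reduced n w" "x = cls n w" using assms simples_iff by blast
  have ww: "w \<in> words n" using w(1) by (simp add: reduced_def)
  have ph: "Phi n x = pl n w" using Phi_cls[OF ww] w(2) by simp
  show "Phi n x \<in> P n" using ph pl_P[OF ww] by simp
  show "DL n x = LD n (Phi n x)" using DL_cls[OF w(1)] w(2) ph by (simp add: LD_def)
  show "DR n x = RD n (Phi n x)" using DR_cls[OF w(1)] w(2) ph by (simp add: RD_def)
qed

lemma Phi_inj: "inj_on (Phi n) (simples n)"
proof (rule inj_onI)
  fix x y assume x: "x \<in> simples n" and y: "y \<in> simples n" and e: "Phi n x = Phi n y"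
  obtain v where v: "reduced n v" "x = cls n v" using x simples_iff by blast
  obtain w where w: "reduced n w" "y = cls n w" using y simples_iff by blast
  have vw: "v \<in> words n" "w \<in> words n" using v w by (simp_all add: reduced_def)
  have "pl n v = pl n w" using e Phi_cls[OF vw(1)] Phi_cls[OF vw(2)] v w by simp
  then have "braid_eq v w" using matsumoto[OF v(1) w(1)] by simp
  then show "x = y" using cls_eq[OF vw] v w by simp
qed

lemma Phi_surj: "p \<in> P n \<Longrightarrow> \<exists>x \<in> simples n. Phi n x = p"
proof -
  assume "p \<in> P n"
  then obtain w where w: "reduced n w" "pl n w = p" using exists_reduced by blast
  have "cls n w \<in> simples n" using w(1) simples_iff by blast
  moreover have "Phi n (cls n w) = p" using Phi_cls w by (simp add: reduced_def)
  ultimately show ?thesis by blast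
qed

lemma b_Tup:
  assumes n: "n \<ge> 1"
  shows "b n 4 (cls n (Delta (n - 1))) = card (Tup n)"
proof -
  define X where "X = cls n (Delta (n - 1))"
  define S where "S = {xs. length xs = 4 \<and> normal_seq n xs \<and> last xs = X}"
  have rX: "reduced n (Delta (n - 1))" using reduced_Delta by simp
  have X: "X \<in> simples n" using rX simples_iff X_def by blast
  have PhiX: "Phi n X = pl n (Delta (n - 1))" using Phi_cls rX X_def by (simp add: reduced_def)
  have inj: "inj_on (map (Phi n)) S"
  proof (rule inj_onI)
    fix xs ys assume "xs \<in> S" "ys \<in> S" "map (Phi n) xs = map (Phi n) ys"
    moreover have "set xs \<union> set ys \<subseteq> simples n"
      using calculation by (auto simp: S_def normal_seq_def)
    then have "inj_on (Phi n) (set xs \<union> set ys)" by (rule inj_on_subset[OF Phi_inj])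
    ultimately show "xs = ys" using map_inj_on by blast
  qed
  have img: "map (Phi n) ` S = Tup n"
  proof
    show "map (Phi n) ` S \<subseteq> Tup n"
    proof
      fix ps assume "ps \<in> map (Phi n) ` S"
      then obtain xs where xs: "xs \<in> S" "ps = map (Phi n) xs" by blast
      have sx: "set xs \<subseteq> simples n" using xs(1) by (simp add: S_def normal_seq_def)
      have l: "length xs = 4" using xs(1) by (simp add: S_def)
      have "set ps \<subseteq> P n" using xs(2) sx simple_props(1) by auto
      moreover have "\<forall>k. Suc k < length ps \<longrightarrow> LD n (ps ! Suc k) \<subseteq> RD n (ps ! k)"
      proof (intro allI impI)
        fix k assume k: "Suc k < length ps"
        have m: "xs ! k \<in> simples n" "xs ! Suc k \<in> simples n" using sx k xs(2) by auto
        have "DL n (xs ! Suc k) \<subseteq> DR n (xs ! k)" using xs(1) k xs(2) by (simp add: S_def normal_seq_def)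
        then show "LD n (ps ! Suc k) \<subseteq> RD n (ps ! k)"
          using simple_props(2)[OF m(2)] simple_props(3)[OF m(1)] k xs(2) by simp
      qed
      moreover have "last ps = pl n (Delta (n - 1))"
      proof -
        have "xs \<noteq> []" using l by auto
        then have "last ps = Phi n (last xs)" using xs(2) by (simp add: last_map)
        then show ?thesis using xs(1) PhiX by (simp add: S_def)
      qed
      ultimately show "ps \<in> Tup n" using l xs(2) by (simp add: Tup_def)
    qed
    show "Tup n \<subseteq> map (Phi n) ` S"
    proof
      fix ps assume ps: "ps \<in> Tup n"
      define Psi where "Psi p = (SOME x. x \<in> simples n \<and> Phi n x = p)" for p
      have Psi: "Psi p \<in> simples n \<and> Phi n (Psi p) = p" if "p \<in> P n" for p
      proof -
        have "\<exists>x. x \<in> simples n \<and> Phi n x = p" using Phi_surj[OF that] by blast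
        then show ?thesis unfolding Psi_def by (rule someI_ex)
      qed
      define xs where "xs = map Psi ps"
      have sps: "set ps \<subseteq> P n" using ps by (simp add: Tup_def)
      have pm: "map (Phi n) xs = ps" unfolding xs_def using Psi sps by (induction ps) auto
      have sx: "set xs \<subseteq> simples n" unfolding xs_def using Psi sps by auto
      have l: "length xs = 4" using ps by (simp add: Tup_def xs_def)
      have "normal_seq n xs"
        unfolding normal_seq_def
      proof (intro conjI allI impI)
        show "set xs \<subseteq> simples n" by (rule sx)
        fix k assume k: "Suc k < length xs"
        have m: "xs ! k \<in> simples n" "xs ! Suc k \<in> simples n" using sx k by auto
        have "LD n (ps ! Suc k) \<subseteq> RD n (ps ! k)" using ps k l by (simp add: Tup_def)
        moreover have "Phi n (xs ! k) = ps ! k" "Phi n (xs ! Suc k) = ps ! Suc k"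
        proof -
          have "map (Phi n) xs ! k = Phi n (xs ! k)" "map (Phi n) xs ! Suc k = Phi n (xs ! Suc k)"
            using k by simp_all
          then show "Phi n (xs ! k) = ps ! k" "Phi n (xs ! Suc k) = ps ! Suc k" using pm by simp_all
        qed
        ultimately show "DL n (xs ! Suc k) \<subseteq> DR n (xs ! k)"
          using simple_props(2)[OF m(2)] simple_props(3)[OF m(1)] by simp
      qed
      moreover have "last xs = X"
      proof -
        have ne: "xs \<noteq> []" using l by auto
        have "last xs \<in> simples n" using sx ne by auto
        moreover have "Phi n (last xs) = Phi n X"
        proof -
          have "last (map (Phi n) xs) = Phi n (last xs)" using ne by (rule last_map)
          moreover have "last ps = pl n (Delta (n - 1))" using ps by (simp add: Tup_def)
          ultimately show ?thesis using pm PhiX by simp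
        qed
        ultimately show ?thesis using inj_onD[OF Phi_inj _ _ X] by blast
      qed
      ultimately have "xs \<in> S" using l by (simp add: S_def)
      then show "ps \<in> map (Phi n) ` S" using pm by blast
    qed
  qed
  have "b n 4 X = card S" by (simp add: b_def S_def)
  also have "\<dots> = card (map (Phi n) ` S)" using card_image[OF inj] by simp
  also have "\<dots> = card (Tup n)" using img by simp
  finally show ?thesis by (simp add: X_def)
qed

lemma binom_step:
  assumes "t < m"
  shows "(m choose Suc t) * Suc t * fact (m - Suc t) = (m choose t) * fact (m - t)"
proof -
  have a: "fact t * fact (m - t) * (m choose t) = (fact m :: nat)" using binomial_fact_lemma[of t m] assms by simp
  have b: "fact (Suc t) * fact (m - Suc t) * (m choose Suc t) = (fact m :: nat)" using binomial_fact_lemma[of "Suc t" m] assms by simp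
  have "fact t * ((m choose Suc t) * Suc t * fact (m - Suc t)) = fact (Suc t) * fact (m - Suc t) * (m choose Suc t)"
    by (simp add: fact_Suc algebra_simps)
  also have "\<dots> = fact t * ((m choose t) * fact (m - t))" using a b by (simp add: algebra_simps)
  finally show ?thesis by simp
qed

lemma E_arith_gen:
  assumes "1 \<le> t" "t \<le> m"
  shows "(\<Sum>c\<in>{2..<Suc t}. (m choose c) * (c - 1) * fact (m - c)) + (m choose t) * fact (m - t) = fact m"
  using assms
proof (induction t rule: dec_induct)
  case base
  have "(m choose 1) * fact (m - 1) = (fact m :: nat)"
    using assms by (cases m) (auto simp: fact_Suc)
  then show ?case by simp
next
  case (step t)
  have e: "(m choose Suc t) * (Suc t - 1) * fact (m - Suc t) + (m choose Suc t) * fact (m - Suc t)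
      = (m choose t) * fact (m - t)"
    using binom_step[of t m] step by (simp add: algebra_simps)
  have "(\<Sum>c\<in>{2..<Suc (Suc t)}. (m choose c) * (c - 1) * fact (m - c))
      = (\<Sum>c\<in>{2..<Suc t}. (m choose c) * (c - 1) * fact (m - c)) + (m choose Suc t) * (Suc t - 1) * fact (m - Suc t)"
    using step(1) by simp
  then show ?case using step e by (simp add: algebra_simps)
qed

lemma E_arith:
  assumes "1 \<le> m"
  shows "m + (\<Sum>c\<in>{2..<m}. (m choose c) * (c - 1) * fact (m - c)) = fact m"
proof (cases "m = 1")
  case True then show ?thesis by simp
next
  case False
  then have m: "1 \<le> m - 1" "m - 1 \<le> m" using assms by auto
  have "Suc (m - 1) = m" using assms by simp
  moreover have "(m choose (m - 1)) = m" using binomial_symmetric[of "m - 1" m] assms by simp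
  moreover have "m - (m - 1) = 1" using assms by simp
  ultimately show ?thesis using E_arith_gen[OF m] by (simp add: algebra_simps)
qed

lemma sum_pow_card:
  assumes "finite V"
  shows "(\<Sum>U\<in>Pow V. g (card U)) = (\<Sum>c\<le>card V. (card V choose c) * g c)"
proof -
  have "(\<Sum>U\<in>Pow V. g (card U)) = (\<Sum>c\<in>{..card V}. \<Sum>U\<in>{U \<in> Pow V. card U = c}. g (card U))"
    by (rule sum.group[symmetric]) (use assms card_mono in auto)
  also have "\<dots> = (\<Sum>c\<le>card V. (card V choose c) * g c)"
  proof (rule sum.cong[OF refl])
    fix c assume "c \<in> {..card V}"
    have "(\<Sum>U\<in>{U \<in> Pow V. card U = c}. g (card U)) = (\<Sum>U\<in>{U \<in> Pow V. card U = c}. g c)" by simp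
    also have "\<dots> = card {U \<in> Pow V. card U = c} * g c" by simp
    also have "{U \<in> Pow V. card U = c} = {U. U \<subseteq> V \<and> card U = c}" by auto
    finally show "(\<Sum>U\<in>{U \<in> Pow V. card U = c}. g (card U)) = (card V choose c) * g c"
      using n_subsets[OF assms] by simp
  qed
  finally show ?thesis .
qed

definition UU :: "nat \<Rightarrow> nat" where
  "UU n = (\<Sum>a\<le>n. (n choose a) * fact (n - a))"

lemma UU_rec: "n \<ge> 1 \<Longrightarrow> UU n = n * UU (n - 1) + 1"
proof -
  assume n: "n \<ge> 1"
  have t: "(n choose a) * fact (n - a) = n * ((n - 1 choose a) * fact (n - 1 - a))" if a: "a \<le> n - 1" for a
  proof -
    have "fact a * ((n choose a) * fact (n - a)) = (fact n :: nat)"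
      using binomial_fact_lemma[of a n] a n by (simp add: algebra_simps)
    moreover have "fact a * ((n - 1 choose a) * fact (n - 1 - a)) = (fact (n - 1) :: nat)"
      using binomial_fact_lemma[of a "n - 1"] a by (simp add: algebra_simps)
    moreover have "fact n = n * (fact (n - 1) :: nat)" using n fact_reduce[of n, where 'a=nat] by (simp add: of_nat_id)
    ultimately have "fact a * ((n choose a) * fact (n - a)) = fact a * (n * ((n - 1 choose a) * fact (n - 1 - a)))"
      by (simp add: algebra_simps)
    then show ?thesis by simp
  qed
  have "{..n} = insert n {..n - 1}" using n by auto
  then have "UU n = (n choose n) * fact (n - n) + (\<Sum>a\<le>n - 1. (n choose a) * fact (n - a))"
    unfolding UU_def using n by simp
  also have "\<dots> = 1 + (\<Sum>a\<le>n - 1. n * ((n - 1 choose a) * fact (n - 1 - a)))"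
    using t by simp
  also have "\<dots> = 1 + n * UU (n - 1)" by (simp add: UU_def sum_distrib_left)
  finally show ?thesis by simp
qed

lemma UU_pos: "UU n \<ge> 1"
proof -
  have "(n choose n) * fact (n - n) \<le> UU n" unfolding UU_def by (rule member_le_sum) auto
  then show ?thesis by simp
qed

lemma u_eq:
  fixes u :: "nat \<Rightarrow> nat"
  assumes "u 1 = 1" and "\<And>n. n \<ge> 2 \<Longrightarrow> u n = n * u (n - 1) + n"
  shows "n \<ge> 1 \<Longrightarrow> u n = UU n - 1"
proof (induction n rule: dec_induct)
  case base
  have "UU 1 = 2" by (simp add: UU_def)
  then show ?case using assms(1) by simp
next
  case (step n)
  have "u (Suc n) = Suc n * u n + Suc n" using assms(2)[of "Suc n"] step(1) by simp
  also have "\<dots> = Suc n * (UU n - 1) + Suc n" using step by simp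
  also have "\<dots> = Suc n * UU n"
  proof -
    obtain k where "UU n = Suc k" using UU_pos[of n] by (cases "UU n") auto
    then show ?thesis by (simp add: algebra_simps)
  qed
  also have "\<dots> = UU (Suc n) - 1" using UU_rec[of "Suc n"] by simp
  finally show ?case .
qed

lemma successively_nth:
  "successively R xs \<longleftrightarrow> (\<forall>i. Suc i < length xs \<longrightarrow> R (xs ! i) (xs ! Suc i))"
proof (induction xs)
  case Nil then show ?case by simp
next
  case (Cons a xs)
  show ?case
  proof (cases xs)
    case Nil then show ?thesis by simp
  next
    case (Cons b ys)
    have "successively R (a # xs) \<longleftrightarrow> R a b \<and> successively R xs" using Cons by simp
    also have "\<dots> \<longleftrightarrow> (\<forall>i. Suc i < length (a # xs) \<longrightarrow> R ((a # xs) ! i) ((a # xs) ! Suc i))"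
      unfolding Cons.IH using Cons
      by (auto simp: nth_Cons split: nat.splits)
    finally show ?thesis .
  qed
qed

definition Rv :: "bool \<times> nat \<Rightarrow> bool \<times> nat \<Rightarrow> bool" where
  "Rv p q \<longleftrightarrow> (fst p \<and> \<not> fst q) \<or> snd q < snd p"

definition valid :: "bool list \<Rightarrow> nat list \<Rightarrow> bool" where
  "valid x w \<longleftrightarrow> successively Rv (zip x w)"

definition noexit :: "bool list \<Rightarrow> bool" where
  "noexit x \<longleftrightarrow> successively (\<lambda>a b. \<not> (a \<and> \<not> b)) x"

definition decr :: "nat list \<Rightarrow> bool" where
  "decr w \<longleftrightarrow> successively (\<lambda>a b. b < a) w"

definition dec :: "nat set \<Rightarrow> nat list" where
  "dec U = rev (sorted_list_of_set U)"

definition TT :: "nat set \<Rightarrow> (bool list \<times> nat list) set" where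
  "TT V = {(x, w). length x = length w \<and> distinct w \<and> set w = V \<and> valid x w}"

definition EE :: "nat set \<Rightarrow> (bool list \<times> nat list) set" where
  "EE V = {(x, w) \<in> TT V. x = [] \<or> last x}"

lemma valid_nth: "length x = length w \<Longrightarrow>
  valid x w \<longleftrightarrow> (\<forall>i. Suc i < length x \<longrightarrow> (x ! i \<and> \<not> x ! Suc i) \<or> w ! Suc i < w ! i)"
  unfolding valid_def successively_nth by (simp add: Rv_def)

lemma valid_append:
  assumes "length x1 = length w1" "length x2 = length w2"
  shows "valid (x1 @ x2) (w1 @ w2) \<longleftrightarrow> valid x1 w1 \<and> valid x2 w2 \<and>
    (x1 = [] \<or> x2 = [] \<or> Rv (last x1, last w1) (hd x2, hd w2))"
proof -
  have "x1 \<noteq> [] \<Longrightarrow> last (zip x1 w1) = (last x1, last w1)"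
    using assms(1) by (induction x1 w1 rule: list_induct2) auto
  moreover have "x2 \<noteq> [] \<Longrightarrow> hd (zip x2 w2) = (hd x2, hd w2)"
    using assms(2) by (cases x2; cases w2) auto
  moreover have "zip x1 w1 = [] \<longleftrightarrow> x1 = []" "zip x2 w2 = [] \<longleftrightarrow> x2 = []" using assms by auto
  ultimately show ?thesis unfolding valid_def zip_append[OF assms(1)] successively_append_iff by auto
qed

lemma decr_nth: "decr w \<longleftrightarrow> (\<forall>i. Suc i < length w \<longrightarrow> w ! Suc i < w ! i)"
  unfolding decr_def successively_nth by simp

lemma noexit_valid: "noexit x \<Longrightarrow> length x = length w \<Longrightarrow> valid x w \<longleftrightarrow> decr w"
  unfolding decr_nth using valid_nth[of x w] unfolding noexit_def successively_nth by auto

lemma dec_props: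
  assumes "finite U"
  shows "set (dec U) = U" "distinct (dec U)" "length (dec U) = card U" "decr (dec U)"
proof -
  show "set (dec U) = U" "distinct (dec U)" "length (dec U) = card U" using assms by (simp_all add: dec_def)
  have "sorted_wrt (<) (sorted_list_of_set U)" by simp
  then have "sorted_wrt (>) (dec U)" by (simp add: dec_def sorted_wrt_rev)
  then show "decr (dec U)" unfolding decr_def by (simp add: successively_if_sorted_wrt)
qed

lemma decr_dec: "decr w \<Longrightarrow> w = dec (set w)"
proof -
  assume "decr w"
  then have "sorted_wrt (\<lambda>a b. b < a) w" unfolding decr_def
    by (subst successively_conv_sorted_wrt[symmetric]) (auto simp: transp_def)
  then have s: "sorted_wrt (<) (rev w)" by (simp add: sorted_wrt_rev)
  then have "distinct (rev w)" by (simp add: strict_sorted_iff)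
  then have "sorted_list_of_set (set w) = rev w"
    using s sorted_list_of_set_unique[of "set w" "rev w"] by (simp add: distinct_card)
  then show "w = dec (set w)" by (simp add: dec_def)
qed

lemma noexit_rep: "noexit (replicate a False @ replicate c True)"
  unfolding noexit_def successively_nth by (auto simp: nth_append)

lemma noexit_form: "noexit x \<Longrightarrow> \<exists>a c. x = replicate a False @ replicate c True"
proof (induction x)
  case Nil then show ?case by (intro exI[of _ 0]) simp
next
  case (Cons y x)
  have nx: "noexit x" using Cons(2) by (cases x) (simp_all add: noexit_def)
  then obtain a c where x: "x = replicate a False @ replicate c True" using Cons(1) by blast
  show ?case
  proof (cases y)
    case False
    then show ?thesis using x by (intro exI[of _ "Suc a"] exI[of _ c]) simp
  next
    case True
    have "a = 0"
    proof (rule ccontr)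
      assume "a \<noteq> 0"
      then have "hd x = False" using x by (cases a) auto
      moreover have "x \<noteq> []" using x \<open>a \<noteq> 0\<close> by simp
      ultimately show False using Cons(2) True by (simp add: noexit_def successively_Cons)
    qed
    then show ?thesis using x True by (intro exI[of _ 0] exI[of _ "Suc c"]) simp
  qed
qed

lemma rep_unique:
  "xs @ replicate k v = ys @ replicate k' v \<Longrightarrow> (xs = [] \<or> last xs \<noteq> v) \<Longrightarrow> (ys = [] \<or> last ys \<noteq> v)
    \<Longrightarrow> xs = ys \<and> k = k'"
proof (induction k arbitrary: k')
  case 0
  show ?case
  proof (cases k')
    case 0 then show ?thesis using "0.prems" by simp
  next
    case (Suc j)
    then have "xs = (ys @ replicate j v) @ [v]" using "0.prems"(1) by (simp add: replicate_append_same)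
    then show ?thesis using "0.prems"(2) by simp
  qed
next
  case (Suc k)
  show ?case
  proof (cases k')
    case 0
    then have "ys = (xs @ replicate k v) @ [v]" using Suc.prems(1) by (simp add: replicate_append_same)
    then show ?thesis using Suc.prems(3) by simp
  next
    case (Suc j)
    then have "(xs @ replicate k v) @ [v] = (ys @ replicate j v) @ [v]"
      using Suc.prems(1) by (simp add: replicate_append_same)
    then have "xs @ replicate k v = ys @ replicate j v" by simp
    then show ?thesis using Suc.IH Suc.prems Suc by simp
  qed
qed

lemma trail_split: "\<exists>x1 k. x = x1 @ replicate k False \<and> (x1 = [] \<or> last x1)"
proof (induction x rule: rev_induct)
  case Nil then show ?case by simp
next
  case (snoc y x)
  show ?case
  proof (cases y)
    case True then show ?thesis by (intro exI[of _ "x @ [y]"] exI[of _ 0]) simp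
  next
    case False
    from snoc obtain x1 k where "x = x1 @ replicate k False" "x1 = [] \<or> last x1" by blast
    then show ?thesis using False by (intro exI[of _ x1] exI[of _ "Suc k"]) (simp add: replicate_append_same)
  qed
qed

lemma exit_split: "noexit x \<or> (\<exists>x1 x2. x = x1 @ x2 \<and> x1 \<noteq> [] \<and> last x1 \<and> x2 \<noteq> [] \<and> \<not> hd x2 \<and> noexit x2)"
proof (induction x rule: rev_induct)
  case Nil then show ?case by (simp add: noexit_def)
next
  case (snoc y x)
  have ne: "noexit (z @ [y]) \<longleftrightarrow> noexit z \<and> (z = [] \<or> \<not> (last z \<and> \<not> y))" for z
    unfolding noexit_def successively_append_iff by auto
  from snoc show ?case
  proof
    assume nx: "noexit x"
    show ?thesis
    proof (cases "x \<noteq> [] \<and> last x \<and> \<not> y")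
      case True
      then show ?thesis by (intro disjI2 exI[of _ x] exI[of _ "[y]"]) (simp add: noexit_def)
    next
      case False
      then show ?thesis using nx ne by auto
    qed
  next
    assume "\<exists>x1 x2. x = x1 @ x2 \<and> x1 \<noteq> [] \<and> last x1 \<and> x2 \<noteq> [] \<and> \<not> hd x2 \<and> noexit x2"
    then obtain x1 x2 where h: "x = x1 @ x2" "x1 \<noteq> []" "last x1" "x2 \<noteq> []" "\<not> hd x2" "noexit x2" by blast
    show ?thesis
    proof (cases "last x2 \<and> \<not> y")
      case True
      then show ?thesis using h by (intro disjI2 exI[of _ x] exI[of _ "[y]"]) (simp add: noexit_def)
    next
      case False
      then have "noexit (x2 @ [y])" using ne h by auto
      then show ?thesis using h by (intro disjI2 exI[of _ x1] exI[of _ "x2 @ [y]"]) simp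
    qed
  qed
qed

lemma finite_TT: "finite V \<Longrightarrow> finite (TT V)"
proof -
  assume V: "finite V"
  have "TT V \<subseteq> {x. set x \<subseteq> (UNIV :: bool set) \<and> length x = card V} \<times> {w. set w \<subseteq> V \<and> length w = card V}"
    by (auto simp: TT_def distinct_card[symmetric])
  moreover have "finite ({x. set x \<subseteq> (UNIV :: bool set) \<and> length x = card V} \<times> {w. set w \<subseteq> V \<and> length w = card V})"
    using V by (intro finite_cartesian_product finite_lists_length_eq) auto
  ultimately show ?thesis by (rule finite_subset)
qed

lemma finite_EE: "finite V \<Longrightarrow> finite (EE V)"
  by (rule finite_subset[OF _ finite_TT]) (auto simp: EE_def)

lemma TT_length: "(x, w) \<in> TT V \<Longrightarrow> length x = card V \<and> length w = card V"
  by (auto simp: TT_def distinct_card[symmetric])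

lemma split_w:
  assumes "distinct (w1 @ w2)" "set (w1 @ w2) = V"
  shows "distinct w1" "distinct w2" "set w1 = V - set w2" "set w2 \<subseteq> V"
  using assms by auto

definition gT :: "nat set \<times> (bool list \<times> nat list) \<Rightarrow> bool list \<times> nat list" where
  "gT = (\<lambda>(U, (x, w)). (x @ replicate (card U) False, w @ dec U))"

lemma TT_decomp:
  assumes V: "finite V"
  shows "TT V = gT ` Sigma (Pow V) (\<lambda>U. EE (V - U))"
proof
  show "TT V \<subseteq> gT ` Sigma (Pow V) (\<lambda>U. EE (V - U))"
  proof
    fix z assume z: "z \<in> TT V"
    obtain x w where zxw: "z = (x, w)" by (cases z)
    have xw: "length x = length w" "distinct w" "set w = V" "valid x w" using z zxw by (auto simp: TT_def)
    obtain x1 k where x1: "x = x1 @ replicate k False" "x1 = [] \<or> last x1" using trail_split by blast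
    define w1 where "w1 = take (length x1) w"
    define w2 where "w2 = drop (length x1) w"
    have ww: "w = w1 @ w2" by (simp add: w1_def w2_def)
    have l1: "length x1 = length w1" using xw x1 by (simp add: w1_def)
    have l2: "length (replicate k False) = length w2" using xw x1 by (simp add: w2_def)
    have v: "valid x1 w1" "valid (replicate k False) w2"
      using valid_append[OF l1 l2] xw(4) x1 ww by auto
    have "noexit (replicate k False)" using noexit_rep[of k 0] by simp
    then have "decr w2" using noexit_valid v(2) l2 by blast
    then have w2d: "w2 = dec (set w2)" by (rule decr_dec)
    have dv: "distinct (w1 @ w2)" using xw(2) ww by metis
    have sv: "set (w1 @ w2) = V" using xw(3) ww by metis
    note sw = split_w[OF dv sv]
    have ck: "card (set w2) = k" using sw(2) l2 by (simp add: distinct_card)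
    have "(x1, w1) \<in> EE (V - set w2)" using l1 sw v(1) x1(2) by (simp add: EE_def TT_def)
    moreover have "z = gT (set w2, (x1, w1))" using zxw x1 ww w2d[symmetric] ck by (simp add: gT_def)
    ultimately show "z \<in> gT ` Sigma (Pow V) (\<lambda>U. EE (V - U))" using sw(4) by blast
  qed
  show "gT ` Sigma (Pow V) (\<lambda>U. EE (V - U)) \<subseteq> TT V"
  proof
    fix z assume "z \<in> gT ` Sigma (Pow V) (\<lambda>U. EE (V - U))"
    then obtain U x1 w1 where U: "U \<subseteq> V" and e: "(x1, w1) \<in> EE (V - U)" and z: "z = gT (U, (x1, w1))" by auto
    have fU: "finite U" using U V finite_subset by blast
    have h: "length x1 = length w1" "distinct w1" "set w1 = V - U" "valid x1 w1" "x1 = [] \<or> last x1"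
      using e by (auto simp: EE_def TT_def)
    have d: "set (dec U) = U" "distinct (dec U)" "length (dec U) = card U" "decr (dec U)" using dec_props[OF fU] by auto
    have l2: "length (replicate (card U) False) = length (dec U)" using d by simp
    have "valid (replicate (card U) False) (dec U)"
      using noexit_valid[OF _ l2] noexit_rep[of "card U" 0] d by simp
    moreover have "x1 = [] \<or> replicate (card U) False = [] \<or> Rv (last x1, last w1) (hd (replicate (card U) False), hd (dec U))"
      using h(5) by (cases "card U") (auto simp: Rv_def)
    ultimately have "valid (x1 @ replicate (card U) False) (w1 @ dec U)"
      using valid_append[OF h(1) l2] h(4) by simp
    moreover have "distinct (w1 @ dec U)" using h d by auto
    moreover have "set (w1 @ dec U) = V" using h d U by auto
    ultimately show "z \<in> TT V" using z h(1) d by (simp add: gT_def TT_def)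
  qed
qed

lemma gT_inj:
  assumes V: "finite V"
  shows "inj_on gT (Sigma (Pow V) (\<lambda>U. EE (V - U)))"
proof (rule inj_onI)
  fix p q assume p: "p \<in> Sigma (Pow V) (\<lambda>U. EE (V - U))" and q: "q \<in> Sigma (Pow V) (\<lambda>U. EE (V - U))"
    and e: "gT p = gT q"
  obtain U x1 w1 where pp: "p = (U, (x1, w1))" by (cases p) auto
  obtain U' x1' w1' where qq: "q = (U', (x1', w1'))" by (cases q) auto
  have hp: "U \<subseteq> V" "length x1 = length w1" "x1 = [] \<or> last x1" using p pp by (auto simp: EE_def TT_def)
  have hq: "U' \<subseteq> V" "length x1' = length w1'" "x1' = [] \<or> last x1'" using q qq by (auto simp: EE_def TT_def)
  have ex: "x1 @ replicate (card U) False = x1' @ replicate (card U') False"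
    and ew: "w1 @ dec U = w1' @ dec U'" using e pp qq by (auto simp: gT_def)
  have "x1 = x1' \<and> card U = card U'" using rep_unique[OF ex] hp(3) hq(3) by auto
  then have "w1 = w1'" "dec U = dec U'" using ew hp(2) hq(2) by (auto simp: append_eq_append_conv)
  moreover have "finite U" "finite U'" using hp(1) hq(1) V finite_subset by blast+
  ultimately have "U = U'" by (metis dec_props(1))
  then show "p = q" using pp qq \<open>x1 = x1' \<and> card U = card U'\<close> \<open>w1 = w1'\<close> by simp
qed

lemma card_TT_from_EE:
  assumes V: "finite V" and EEc: "\<And>W. W \<subseteq> V \<Longrightarrow> card (EE W) = fact (card W)"
  shows "card (TT V) = UU (card V)"
proof -
  have "card (TT V) = card (Sigma (Pow V) (\<lambda>U. EE (V - U)))"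
    unfolding TT_decomp[OF V] by (rule card_image[OF gT_inj[OF V]])
  also have "\<dots> = (\<Sum>U\<in>Pow V. card (EE (V - U)))"
    by (rule card_SigmaI) (use V finite_EE in auto)
  also have "\<dots> = (\<Sum>U\<in>Pow V. fact (card V - card U))"
  proof (rule sum.cong[OF refl])
    fix U assume "U \<in> Pow V"
    then have "card (V - U) = card V - card U" using V by (simp add: card_Diff_subset finite_subset)
    then show "card (EE (V - U)) = fact (card V - card U)" using EEc[of "V - U"] by simp
  qed
  also have "\<dots> = UU (card V)" unfolding UU_def by (rule sum_pow_card[OF V])
  finally show ?thesis .
qed

definition NE :: "nat set \<Rightarrow> (bool list \<times> nat list) set" where
  "NE V = (\<lambda>a. (replicate a False @ replicate (card V - a) True, dec V)) ` {..<card V}"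

definition IE :: "nat set \<Rightarrow> (nat set \<times> nat) set" where
  "IE V = {(U, a). U \<subseteq> V \<and> U \<noteq> V \<and> 2 \<le> card U \<and> 1 \<le> a \<and> a < card U}"

definition hE :: "(nat set \<times> nat) \<times> (bool list \<times> nat list) \<Rightarrow> bool list \<times> nat list" where
  "hE = (\<lambda>((U, a), (x, w)). (x @ replicate a False @ replicate (card U - a) True, w @ dec U))"

lemma EE_decomp:
  assumes V: "finite V" "V \<noteq> {}"
  shows "EE V = NE V \<union> hE ` Sigma (IE V) (\<lambda>(U, a). EE (V - U))"
proof
  show "EE V \<subseteq> NE V \<union> hE ` Sigma (IE V) (\<lambda>(U, a). EE (V - U))"
  proof
    fix z assume z: "z \<in> EE V"
    obtain x w where zxw: "z = (x, w)" by (cases z)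
    have xw: "length x = length w" "distinct w" "set w = V" "valid x w" "x = [] \<or> last x"
      using z zxw by (auto simp: EE_def TT_def)
    have lw: "length w = card V" using xw(2,3) distinct_card by metis
    have xne: "x \<noteq> []" using xw(1) lw V by auto
    have lx: "last x" using xw(5) xne by simp
    from exit_split[of x] show "z \<in> NE V \<union> hE ` Sigma (IE V) (\<lambda>(U, a). EE (V - U))"
    proof
      assume nx: "noexit x"
      then obtain a c where xac: "x = replicate a False @ replicate c True" using noexit_form by blast
      have "c \<noteq> 0" using lx xac xne by (cases c) auto
      then have a: "a < card V" using xw(1) lw xac by simp
      have "decr w" using noexit_valid[OF nx xw(1)] xw(4) by simp
      then have "w = dec V" using decr_dec xw(3) by metis
      moreover have "c = card V - a" using xw(1) lw xac by simp
      ultimately have "z \<in> NE V" using a zxw xac unfolding NE_def by blast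
      then show ?thesis by blast
    next
      assume "\<exists>x1 x2. x = x1 @ x2 \<and> x1 \<noteq> [] \<and> last x1 \<and> x2 \<noteq> [] \<and> \<not> hd x2 \<and> noexit x2"
      then obtain x1 x2 where h: "x = x1 @ x2" "x1 \<noteq> []" "last x1" "x2 \<noteq> []" "\<not> hd x2" "noexit x2" by blast
      obtain a c where x2: "x2 = replicate a False @ replicate c True" using noexit_form h(6) by blast
      have a1: "a \<noteq> 0" using h(5) x2 h(4) by (cases a) auto
      have c1: "c \<noteq> 0"
      proof
        assume "c = 0"
        then have "last x = False" using h(1) x2 a1 by (cases a) auto
        then show False using lx by simp
      qed
      define w1 where "w1 = take (length x1) w"
      define w2 where "w2 = drop (length x1) w"
      have ww: "w = w1 @ w2" by (simp add: w1_def w2_def)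
      have l1: "length x1 = length w1" using xw h by (simp add: w1_def)
      have l2: "length x2 = length w2" using xw h by (simp add: w2_def)
      have vv: "valid x1 w1 \<and> valid x2 w2"
        using valid_append[OF l1 l2] xw(4) h(1) ww by simp
      have "decr w2" using noexit_valid[OF h(6) l2] vv by simp
      then have w2d: "dec (set w2) = w2" using decr_dec by metis
      have dv: "distinct (w1 @ w2)" using xw(2) ww by metis
      have sv: "set (w1 @ w2) = V" using xw(3) ww by metis
      note sw = split_w[OF dv sv]
      define U where "U = set w2"
      have cU: "card U = a + c" using sw(2) l2 x2 by (simp add: U_def distinct_card)
      have "w1 \<noteq> []" using l1 h(2) by auto
      then obtain y where "y \<in> set w1" by (cases w1) auto
      then have "U \<noteq> V" using sw(3) U_def by auto
      then have I: "(U, a) \<in> IE V" using cU a1 c1 sw(4) by (simp add: IE_def U_def)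
      have "(x1, w1) \<in> EE (V - U)" using l1 sw vv h(3) by (simp add: EE_def TT_def U_def)
      moreover have "z = hE ((U, a), (x1, w1))"
        using zxw h(1) x2 ww w2d cU by (simp add: hE_def U_def)
      ultimately show ?thesis using I by blast
    qed
  qed
  show "NE V \<union> hE ` Sigma (IE V) (\<lambda>(U, a). EE (V - U)) \<subseteq> EE V"
  proof
    fix z assume "z \<in> NE V \<union> hE ` Sigma (IE V) (\<lambda>(U, a). EE (V - U))"
    then consider (ne) "z \<in> NE V" | (he) "z \<in> hE ` Sigma (IE V) (\<lambda>(U, a). EE (V - U))" by blast
    then show "z \<in> EE V"
    proof cases
      case ne
      then obtain a where a: "a < card V" "z = (replicate a False @ replicate (card V - a) True, dec V)"
        by (auto simp: NE_def)
      have d: "set (dec V) = V" "distinct (dec V)" "length (dec V) = card V" "decr (dec V)"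
        using dec_props[OF V(1)] by auto
      have l: "length (replicate a False @ replicate (card V - a) True) = length (dec V)" using a d by simp
      have "valid (replicate a False @ replicate (card V - a) True) (dec V)"
        using noexit_valid[OF noexit_rep l] d by simp
      moreover have "last (replicate a False @ replicate (card V - a) True)" using a by simp
      ultimately show ?thesis using a d l by (simp add: EE_def TT_def)
    next
      case he
      then obtain U a x1 w1 where I: "(U, a) \<in> IE V" and e: "(x1, w1) \<in> EE (V - U)"
        and z: "z = hE ((U, a), (x1, w1))" by auto
      have IU: "U \<subseteq> V" "1 \<le> a" "a < card U" using I by (auto simp: IE_def)
      have fU: "finite U" using IU V finite_subset by blast
      have h: "length x1 = length w1" "distinct w1" "set w1 = V - U" "valid x1 w1" "x1 = [] \<or> last x1"
        using e by (auto simp: EE_def TT_def)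
      have d: "set (dec U) = U" "distinct (dec U)" "length (dec U) = card U" "decr (dec U)"
        using dec_props[OF fU] by auto
      let ?x2 = "replicate a False @ replicate (card U - a) True"
      have l2: "length ?x2 = length (dec U)" using d IU by simp
      have v2: "valid ?x2 (dec U)" using noexit_valid[OF noexit_rep l2] d by simp
      have hd2: "hd ?x2 = False" using IU by (cases a) auto
      have "x1 = [] \<or> ?x2 = [] \<or> Rv (last x1, last w1) (hd ?x2, hd (dec U))"
        using h(5) hd2 by (auto simp: Rv_def)
      then have "valid (x1 @ ?x2) (w1 @ dec U)" using valid_append[OF h(1) l2] h(4) v2 by simp
      moreover have "distinct (w1 @ dec U)" using h d by auto
      moreover have "set (w1 @ dec U) = V" using h d IU by auto
      moreover have "last (x1 @ ?x2)" using IU by simp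
      ultimately show ?thesis using z h(1) l2 by (simp add: hE_def EE_def TT_def)
    qed
  qed
qed

lemma NE_noexit: "z \<in> NE V \<Longrightarrow> noexit (fst z)"
  by (auto simp: NE_def noexit_rep)

lemma hE_exit:
  assumes "finite V" "p \<in> Sigma (IE V) (\<lambda>(U, a). EE (V - U))"
  shows "\<not> noexit (fst (hE p))"
proof -
  obtain U a x1 w1 where pp: "p = ((U, a), (x1, w1))" by (cases p) auto
  have I: "U \<subseteq> V" "U \<noteq> V" "1 \<le> a" using assms pp by (auto simp: IE_def)
  have h: "length x1 = length w1" "set w1 = V - U" "x1 = [] \<or> last x1"
    using assms pp by (auto simp: EE_def TT_def)
  have "V - U \<noteq> {}" using I by auto
  then have "x1 \<noteq> []" using h by auto
  then have "last x1" using h by simp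
  moreover have "hd (replicate a False @ replicate (card U - a) True) = False" using I by (cases a) auto
  moreover have "replicate a False @ replicate (card U - a) True \<noteq> []" using I by (cases a) auto
  ultimately show ?thesis using \<open>x1 \<noteq> []\<close> pp
    unfolding noexit_def hE_def by (auto simp: successively_append_iff)
qed

lemma hE_inj:
  assumes V: "finite V"
  shows "inj_on hE (Sigma (IE V) (\<lambda>(U, a). EE (V - U)))"
proof (rule inj_onI)
  fix p q assume p: "p \<in> Sigma (IE V) (\<lambda>(U, a). EE (V - U))" and q: "q \<in> Sigma (IE V) (\<lambda>(U, a). EE (V - U))"
    and e: "hE p = hE q"
  obtain U a x1 w1 where pp: "p = ((U, a), (x1, w1))" by (cases p) auto
  obtain U' a' x1' w1' where qq: "q = ((U', a'), (x1', w1'))" by (cases q) auto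
  have Ip: "U \<subseteq> V" "1 \<le> a" "a < card U" using p pp by (auto simp: IE_def)
  have Iq: "U' \<subseteq> V" "1 \<le> a'" "a' < card U'" using q qq by (auto simp: IE_def)
  have hp: "length x1 = length w1" "x1 = [] \<or> last x1" using p pp by (auto simp: EE_def TT_def)
  have hq: "length x1' = length w1'" "x1' = [] \<or> last x1'" using q qq by (auto simp: EE_def TT_def)
  have ex: "(x1 @ replicate a False) @ replicate (card U - a) True = (x1' @ replicate a' False) @ replicate (card U' - a') True"
    and ew: "w1 @ dec U = w1' @ dec U'" using e pp qq by (auto simp: hE_def)
  have l1: "last (x1 @ replicate a False) \<noteq> True" using Ip by (cases a) auto
  have l2: "last (x1' @ replicate a' False) \<noteq> True" using Iq by (cases a') auto
  have s1: "x1 @ replicate a False = x1' @ replicate a' False" "card U - a = card U' - a'"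
    using rep_unique[OF ex] l1 l2 by auto
  have s2: "x1 = x1'" "a = a'" using rep_unique[OF s1(1)] hp(2) hq(2) by auto
  have "card U = card U'" using s1(2) s2(2) Ip Iq by simp
  then have "w1 = w1'" "dec U = dec U'" using ew hp(1) hq(1) s2(1) by (auto simp: append_eq_append_conv)
  moreover have "finite U" "finite U'" using Ip(1) Iq(1) V finite_subset by blast+
  ultimately have "U = U'" by (metis dec_props(1))
  then show "p = q" using pp qq s2 \<open>w1 = w1'\<close> by simp
qed

lemma NE_card: "finite V \<Longrightarrow> card (NE V) = card V"
proof -
  assume V: "finite V"
  have "inj_on (\<lambda>a. (replicate a False @ replicate (card V - a) True, dec V)) {..<card V}"
  proof (rule inj_onI)
    fix a a' assume "a \<in> {..<card V}" "a' \<in> {..<card V}"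
      and "(replicate a False @ replicate (card V - a) True, dec V) = (replicate a' False @ replicate (card V - a') True, dec V)"
    then have e: "replicate a False @ replicate (card V - a) True = replicate a' False @ replicate (card V - a') True" by simp
    have c1: "replicate a False = [] \<or> last (replicate a False) \<noteq> True" by (cases a) auto
    have c2: "replicate a' False = [] \<or> last (replicate a' False) \<noteq> True" by (cases a') auto
    have "replicate a False = replicate a' False"
      using rep_unique[OF e c1 c2] by simp
    then show "a = a'" by (metis length_replicate)
  qed
  then show ?thesis unfolding NE_def by (simp add: card_image)
qed

lemma sum_IE:
  assumes V: "finite V"
  shows "(\<Sum>p\<in>IE V. fact (card V - card (fst p))) = (\<Sum>c\<in>{2..<card V}. (card V choose c) * (c - 1) * fact (card V - c))"
proof -
  define J where "J = {U \<in> Pow V. U \<noteq> V \<and> 2 \<le> card U}"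
  have IEs: "IE V = Sigma J (\<lambda>U. {1..<card U})" by (auto simp: IE_def J_def)
  have fJ: "finite J" using V by (simp add: J_def)
  have "(\<Sum>p\<in>IE V. fact (card V - card (fst p))) = (\<Sum>U\<in>J. \<Sum>a\<in>{1..<card U}. fact (card V - card U))"
    unfolding IEs using sum.Sigma[of J "\<lambda>U. {1..<card U}" "\<lambda>U a. fact (card V - card U)", symmetric] fJ
    by (simp add: split_def)
  also have "\<dots> = (\<Sum>U\<in>J. (card U - 1) * fact (card V - card U))" by simp
  also have "\<dots> = (\<Sum>U\<in>Pow V. (\<lambda>c. if 2 \<le> c \<and> c < card V then (c - 1) * fact (card V - c) else 0) (card U))"
  proof -
    have "U \<noteq> V \<longleftrightarrow> card U < card V" if "U \<in> Pow V" for U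
    proof
      assume "U \<noteq> V" then have "U \<subset> V" using that by auto
      then show "card U < card V" by (rule psubset_card_mono[OF V])
    next
      assume "card U < card V" then show "U \<noteq> V" by auto
    qed
    then have "(\<Sum>U\<in>Pow V. (\<lambda>c. if 2 \<le> c \<and> c < card V then (c - 1) * fact (card V - c) else 0) (card U))
        = (\<Sum>U\<in>Pow V. if U \<in> J then (card U - 1) * fact (card V - card U) else 0)"
      by (intro sum.cong) (auto simp: J_def)
    also have "\<dots> = (\<Sum>U\<in>J. (card U - 1) * fact (card V - card U))"
      by (subst sum.If_cases) (use V in \<open>auto simp: J_def intro: sum.cong\<close>)
    finally show ?thesis by simp
  qed
  also have "\<dots> = (\<Sum>c\<le>card V. (card V choose c) * (if 2 \<le> c \<and> c < card V then (c - 1) * fact (card V - c) else 0))"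
    by (rule sum_pow_card[OF V])
  also have "\<dots> = (\<Sum>c\<in>{2..<card V}. (card V choose c) * (c - 1) * fact (card V - c))"
  proof -
    have "(\<Sum>c\<le>card V. (card V choose c) * (if 2 \<le> c \<and> c < card V then (c - 1) * fact (card V - c) else 0))
        = (\<Sum>c\<in>{..card V}. if c \<in> {2..<card V} then (card V choose c) * (c - 1) * fact (card V - c) else 0)"
      by (intro sum.cong) auto
    also have "\<dots> = (\<Sum>c\<in>{2..<card V}. (card V choose c) * (c - 1) * fact (card V - c))"
      by (subst sum.If_cases) (auto intro: sum.cong)
    finally show ?thesis .
  qed
  finally show ?thesis .
qed

theorem card_EE: "finite V \<Longrightarrow> card (EE V) = fact (card V)"
proof (induction "card V" arbitrary: V rule: less_induct)
  case less
  show ?case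
  proof (cases "V = {}")
    case True
    then have "EE V = {([], [])}" by (auto simp: EE_def TT_def valid_def)
    then show ?thesis using True by simp
  next
    case False
    have V: "finite V" "V \<noteq> {}" using less(2) False by auto
    have disj: "NE V \<inter> hE ` Sigma (IE V) (\<lambda>(U, a). EE (V - U)) = {}"
      using NE_noexit hE_exit[OF V(1)] by blast
    have fIE: "finite (IE V)"
    proof (rule finite_subset[of _ "Pow V \<times> {..<card V}"])
      show "IE V \<subseteq> Pow V \<times> {..<card V}"
      proof
        fix p assume p: "p \<in> IE V"
        obtain U a where pp: "p = (U, a)" by (cases p)
        have "U \<subseteq> V" "a < card U" using p pp by (auto simp: IE_def)
        moreover have "card U \<le> card V" using calculation(1) V(1) by (rule card_mono[rotated])
        ultimately show "p \<in> Pow V \<times> {..<card V}" using pp by auto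
      qed
      show "finite (Pow V \<times> {..<card V})" using V by simp
    qed
    have fB: "\<forall>p\<in>IE V. finite ((\<lambda>(U, a). EE (V - U)) p)"
      using V finite_EE by auto
    have fS: "finite (Sigma (IE V) (\<lambda>(U, a). EE (V - U)))"
      using fIE fB by (intro finite_SigmaI) auto
    have fN: "finite (NE V)" by (simp add: NE_def)
    have "card (EE V) = card (NE V) + card (hE ` Sigma (IE V) (\<lambda>(U, a). EE (V - U)))"
      unfolding EE_decomp[OF V] by (rule card_Un_disjoint[OF fN finite_imageI[OF fS] disj])
    also have "card (hE ` Sigma (IE V) (\<lambda>(U, a). EE (V - U))) = card (Sigma (IE V) (\<lambda>(U, a). EE (V - U)))"
      by (rule card_image[OF hE_inj[OF V(1)]])
    also have "\<dots> = (\<Sum>p\<in>IE V. card ((\<lambda>(U, a). EE (V - U)) p))"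
      by (rule card_SigmaI[OF fIE fB])
    also have "\<dots> = (\<Sum>p\<in>IE V. fact (card V - card (fst p)))"
    proof (rule sum.cong[OF refl])
      fix p assume p: "p \<in> IE V"
      obtain U a where pp: "p = (U, a)" by (cases p)
      have U: "U \<subseteq> V" "U \<noteq> V" "2 \<le> card U" using p pp by (auto simp: IE_def)
      have "U \<noteq> {}" using U(3) by auto
      have fU: "finite U" using U(1) V(1) by (rule finite_subset)
      have cd: "card (V - U) = card V - card U" using card_Diff_subset[OF fU U(1)] .
      have "card U > 0" using U(3) by simp
      moreover have "card V > 0" using V card_gt_0_iff by blast
      ultimately have "card (V - U) < card V" using cd by simp
      then have "card (EE (V - U)) = fact (card (V - U))" using less(1)[of "V - U"] V by simp
      then show "card ((\<lambda>(U, a). EE (V - U)) p) = fact (card V - card (fst p))" using pp cd by simp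
    qed
    also have "\<dots> = (\<Sum>c\<in>{2..<card V}. (card V choose c) * (c - 1) * fact (card V - c))"
      by (rule sum_IE[OF V(1)])
    finally have "card (EE V) = card V + (\<Sum>c\<in>{2..<card V}. (card V choose c) * (c - 1) * fact (card V - c))"
      using NE_card[OF V(1)] by simp
    also have "\<dots> = fact (card V)"
    proof -
      have "card V > 0" using V card_gt_0_iff by blast
      then have "1 \<le> card V" by simp
      then show ?thesis by (rule E_arith)
    qed
    finally show ?thesis .
  qed
qed

theorem card_TT: "finite V \<Longrightarrow> card (TT V) = UU (card V)"
  by (rule card_TT_from_EE) (auto intro: card_EE finite_subset)

definition before :: "nat list \<Rightarrow> nat \<Rightarrow> nat \<Rightarrow> bool" where
  "before p a c \<longleftrightarrow> (\<exists>i j. i < j \<and> j < length p \<and> p ! i = a \<and> p ! j = c)"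

lemma ldesc_before: "ldesc p k \<longleftrightarrow> before p (Suc k) k"
  by (simp add: ldesc_def before_def)

lemma before_append: "before (u @ v) a c \<longleftrightarrow> before u a c \<or> before v a c \<or> (a \<in> set u \<and> c \<in> set v)"
proof
  assume "before (u @ v) a c"
  then obtain i j where h: "i < j" "j < length (u @ v)" "(u @ v) ! i = a" "(u @ v) ! j = c"
    unfolding before_def by blast
  show "before u a c \<or> before v a c \<or> (a \<in> set u \<and> c \<in> set v)"
  proof (cases "j < length u")
    case True
    then have "before u a c" using h unfolding before_def
      by (intro exI[of _ i] exI[of _ j]) (simp add: nth_append)
    then show ?thesis by simp
  next
    case False
    show ?thesis
    proof (cases "i < length u")
      case True
      have "u ! i = a" using h(3) True by (simp add: nth_append)
      then have A: "a \<in> set u" using True nth_mem by blast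
      have "v ! (j - length u) = c" using h(4) False by (simp add: nth_append)
      then have "c \<in> set v" using h(2) False nth_mem[of "j - length u" v] by simp
      with A show ?thesis by simp
    next
      case False2: False
      have "i - length u < j - length u" "j - length u < length v" using h False False2 by auto
      moreover have "v ! (i - length u) = a" "v ! (j - length u) = c" using h False False2 by (simp_all add: nth_append)
      ultimately have "before v a c" unfolding before_def by blast
      then show ?thesis by simp
    qed
  qed
next
  assume "before u a c \<or> before v a c \<or> (a \<in> set u \<and> c \<in> set v)"
  then consider "before u a c" | "before v a c" | "a \<in> set u" "c \<in> set v" by blast
  then show "before (u @ v) a c"
  proof cases
    case 1
    then obtain i j where h: "i < j" "j < length u" "u ! i = a" "u ! j = c" unfolding before_def by blast
    then show ?thesis unfolding before_def by (intro exI[of _ i] exI[of _ j]) (simp add: nth_append)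
  next
    case 2
    then obtain i j where h: "i < j" "j < length v" "v ! i = a" "v ! j = c" unfolding before_def by blast
    then show ?thesis unfolding before_def
      by (intro exI[of _ "length u + i"] exI[of _ "length u + j"]) (simp add: nth_append)
  next
    case 3
    then obtain i j where h: "i < length u" "u ! i = a" "j < length v" "v ! j = c" by (auto simp: in_set_conv_nth)
    then show ?thesis unfolding before_def
      by (intro exI[of _ i] exI[of _ "length u + j"]) (simp add: nth_append)
  qed
qed

lemma decr_sorted: "decr u \<Longrightarrow> sorted_wrt (\<lambda>a b. b < a) u"
  unfolding decr_def by (subst successively_conv_sorted_wrt[symmetric]) (auto simp: transp_def)

lemma before_decr: "decr u \<Longrightarrow> before u a c \<longleftrightarrow> a \<in> set u \<and> c \<in> set u \<and> c < a"
proof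
  assume d: "decr u" and "before u a c"
  then obtain i j where h: "i < j" "j < length u" "u ! i = a" "u ! j = c" unfolding before_def by blast
  have "u ! j < u ! i" using sorted_wrt_nth_less[OF decr_sorted[OF d] h(1,2)] .
  then show "a \<in> set u \<and> c \<in> set u \<and> c < a" using h by auto
next
  assume d: "decr u" and h: "a \<in> set u \<and> c \<in> set u \<and> c < a"
  then obtain i j where ij: "i < length u" "u ! i = a" "j < length u" "u ! j = c" by (auto simp: in_set_conv_nth)
  have "i < j"
  proof (rule ccontr)
    assume "\<not> i < j"
    then have "j < i \<or> j = i" by auto
    then show False
    proof
      assume "j < i"
      then have "u ! i < u ! j" using sorted_wrt_nth_less[OF decr_sorted[OF d]] ij by blast
      then show False using h ij by simp
    next
      assume "j = i" then show False using h ij by simp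
    qed
  qed
  then show "before u a c" unfolding before_def using ij by blast
qed

lemma fin_sub: "A \<subseteq> {1..(n::nat)} \<Longrightarrow> finite A"
  by (rule finite_subset[OF _ finite_atLeastAtMost])

lemma LD_dec2:
  assumes A: "A \<subseteq> {1..(n::nat)}"
  shows "LD n (dec A @ dec ({1..n} - A)) = {k \<in> {1..<n}. \<not> (k \<in> A \<and> Suc k \<notin> A)}"
proof -
  have fA: "finite A" using fin_sub[OF A] .
  have fB: "finite ({1..n} - A)" by simp
  have dA: "set (dec A) = A" "decr (dec A)" using dec_props[OF fA] by auto
  have dB: "set (dec ({1..n} - A)) = {1..n} - A" "decr (dec ({1..n} - A))" using dec_props[OF fB] by auto
  have "ldesc (dec A @ dec ({1..n} - A)) k \<longleftrightarrow> \<not> (k \<in> A \<and> Suc k \<notin> A)" if k: "k \<in> {1..<n}" for k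
  proof -
    have m: "k \<in> {1..n} - A \<longleftrightarrow> k \<notin> A" "Suc k \<in> {1..n} - A \<longleftrightarrow> Suc k \<notin> A" using k by auto
    have "ldesc (dec A @ dec ({1..n} - A)) k \<longleftrightarrow> (Suc k \<in> A \<and> k \<in> A) \<or> (Suc k \<in> {1..n} - A \<and> k \<in> {1..n} - A)
        \<or> (Suc k \<in> A \<and> k \<in> {1..n} - A)"
      unfolding ldesc_before before_append before_decr[OF dA(2)] before_decr[OF dB(2)] dA(1) dB(1) by simp
    then show ?thesis unfolding m by blast
  qed
  then show ?thesis by (auto simp: LD_def)
qed

lemma RD_of_split:
  assumes "p = u @ v" "decr u" "decr v" "length p = n"
  shows "{1..<n} - {length u} \<subseteq> RD n p"
proof
  fix i assume i: "i \<in> {1..<n} - {length u}"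
  then have i1: "1 \<le> i" "i < n" "i \<noteq> length u" by auto
  obtain j where j: "i = Suc j" using i1 by (cases i) auto
  show "i \<in> RD n p"
  proof (cases "i < length u")
    case True
    have "u ! Suc j < u ! j" using assms(2) True j unfolding decr_nth by simp
    then show ?thesis using True i1 assms(1) j by (simp add: RD_def nth_append)
  next
    case False
    then have g: "length u \<le> j" using i1 j by simp
    have lv: "Suc (j - length u) < length v" using assms(1,4) g i1 j by simp
    have "v ! Suc (j - length u) < v ! (j - length u)" using assms(3) lv unfolding decr_nth by simp
    moreover have "p ! i = v ! Suc (j - length u)" "p ! (i - 1) = v ! (j - length u)"
      using assms(1) g j by (simp_all add: nth_append Suc_diff_le)
    ultimately show ?thesis using i1 by (simp add: RD_def)
  qed
qed

lemma split_of_RD: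
  assumes l: "length p = n" and m: "m \<le> n" and R: "{1..<n} - {m} \<subseteq> RD n p"
  shows "decr (take m p)" "decr (drop m p)"
proof -
  have D: "p ! i < p ! (i - 1)" if "1 \<le> i" "i < n" "i \<noteq> m" for i
    using R that by (auto simp: RD_def)
  show "decr (take m p)" unfolding decr_nth
  proof (intro allI impI)
    fix i assume "Suc i < length (take m p)"
    then have "Suc i < m" "Suc i < n" using l m by auto
    then show "take m p ! Suc i < take m p ! i" using D[of "Suc i"] by simp
  qed
  show "decr (drop m p)" unfolding decr_nth
  proof (intro allI impI)
    fix i assume "Suc i < length (drop m p)"
    then have "m + Suc i < n" using l m by auto
    then show "drop m p ! Suc i < drop m p ! i" using D[of "m + Suc i"] l m by simp
  qed
qed

lemma dec_atLeastAtMost: "dec {1..m} = rev [1..<Suc m]"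
proof -
  have "{1..m} = {1..<Suc m}" by auto
  then show ?thesis by (simp add: dec_def del: upt_Suc)
qed

lemma dec_single: "dec {j} = [j]"
  by (simp add: dec_def)

lemma Dprime:
  assumes n: "n \<ge> 1"
  shows "pl n (Delta (n - 1)) = dec {1..n - 1} @ dec ({1..n} - {1..n - 1})"
proof -
  have e: "{1..n} - {1..n - 1} = {n}" using n by auto
  show ?thesis unfolding e dec_single dec_atLeastAtMost
  proof (rule nth_equalityI)
    show "length (pl n (Delta (n - 1))) = length (rev [1..<Suc (n - 1)] @ [n])" using n by simp
  next
    fix k assume "k < length (pl n (Delta (n - 1)))"
    then have k: "k < n" by simp
    show "pl n (Delta (n - 1)) ! k = (rev [1..<Suc (n - 1)] @ [n]) ! k"
      using k n by (auto simp: pl_Delta_nth nth_append rev_nth simp del: upt_Suc)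
  qed
qed

definition pp :: "nat \<Rightarrow> nat set \<Rightarrow> nat list" where
  "pp n A = dec A @ dec ({1..n} - A)"

lemma pp_P: "A \<subseteq> {1..n} \<Longrightarrow> pp n A \<in> P n"
proof -
  assume A: "A \<subseteq> {1..n}"
  have fA: "finite A" using fin_sub[OF A] .
  have fB: "finite ({1..n} - A)" by simp
  show ?thesis using dec_props[OF fA] dec_props[OF fB] A by (auto simp: pp_def P_def)
qed

lemma RD_pp: "A \<subseteq> {1..n} \<Longrightarrow> {1..<n} - {card A} \<subseteq> RD n (pp n A)"
proof -
  assume A: "A \<subseteq> {1..n}"
  have fA: "finite A" using fin_sub[OF A] .
  have fB: "finite ({1..n} - A)" by simp
  have "{1..<n} - {length (dec A)} \<subseteq> RD n (pp n A)"
    by (rule RD_of_split[of _ "dec A" "dec ({1..n} - A)"]) (use dec_props[OF fA] dec_props[OF fB] P_length[OF pp_P[OF A]] in \<open>simp_all add: pp_def\<close>)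
  then show ?thesis using dec_props[OF fA] by simp
qed

lemma LD_pp: "A \<subseteq> {1..n} \<Longrightarrow> LD n (pp n A) = {k \<in> {1..<n}. \<not> (k \<in> A \<and> Suc k \<notin> A)}"
  unfolding pp_def by (rule LD_dec2)

lemma RD_pp_inv:
  assumes p: "p \<in> P n" and m: "m \<le> n" and R: "{1..<n} - {m} \<subseteq> RD n p"
  shows "\<exists>A. A \<subseteq> {1..n} \<and> card A = m \<and> p = pp n A"
proof -
  have l: "length p = n" using P_length[OF p] .
  have d: "distinct p" "set p = {1..n}" using p by (auto simp: P_def)
  have dt: "decr (take m p)" "decr (drop m p)" using split_of_RD[OF l m R] by auto
  define A where "A = set (take m p)"
  have dd: "distinct (take m p @ drop m p)" using d by simp
  have ss: "set (take m p @ drop m p) = {1..n}" using d by simp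
  have sA: "A \<subseteq> {1..n}" using set_take_subset[of m p] d(2) A_def by simp
  have u: "set (take m p) \<union> set (drop m p) = {1..n}" using ss unfolding set_append .
  have i: "set (take m p) \<inter> set (drop m p) = {}" using dd unfolding distinct_append by blast
  have sB: "set (drop m p) = {1..n} - A" using u i unfolding A_def by blast
  have cA: "card A = m" using dd l m A_def by (simp add: distinct_card)
  have "p = take m p @ drop m p" by simp
  also have "\<dots> = dec A @ dec ({1..n} - A)"
    using decr_dec[OF dt(1)] decr_dec[OF dt(2)] sB A_def by simp
  finally have "p = dec A @ dec ({1..n} - A)" .
  then show ?thesis using sA cA by (auto simp: pp_def)
qed

lemma pp_inj: "A \<subseteq> {1..n} \<Longrightarrow> A' \<subseteq> {1..n} \<Longrightarrow> card A = card A' \<Longrightarrow> pp n A = pp n A' \<Longrightarrow> A = A'"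
proof -
  assume A: "A \<subseteq> {1..n}" and A': "A' \<subseteq> {1..n}" and c: "card A = card A'" and e: "pp n A = pp n A'"
  have fA: "finite A" "finite A'" using fin_sub[OF A] fin_sub[OF A'] by auto
  have "length (dec A) = length (dec A')" using dec_props(3)[OF fA(1)] dec_props(3)[OF fA(2)] c by simp
  then have "dec A = dec A'" using e by (simp add: pp_def append_eq_append_conv)
  then show "A = A'" using dec_props(1)[OF fA(1)] dec_props(1)[OF fA(2)] by metis
qed

lemma last_pp: "j \<in> {1..n} \<Longrightarrow> last (pp n ({1..n} - {j})) = j"
proof -
  assume j: "j \<in> {1..n}"
  then have "{1..n} - ({1..n} - {j}) = {j}" by auto
  then show ?thesis by (simp add: pp_def dec_single)
qed

definition TA :: "nat \<Rightarrow> (nat set \<times> nat list) set" where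
  "TA n = {(A, w). A \<subseteq> {1..n} \<and> A \<noteq> {1..n} \<and> w \<in> P n \<and>
     (\<forall>k\<in>{1..<n}. (k \<in> A \<and> Suc k \<notin> A) \<or> w ! k < w ! (k - 1))}"

definition Gm :: "nat \<Rightarrow> nat set \<times> nat list \<Rightarrow> nat list list" where
  "Gm n = (\<lambda>(A, w). [w, pp n A, pp n ({1..n} - {Suc (card A)}), pl n (Delta (n - 1))])"

lemma card_lt: "A \<subseteq> {1..n} \<Longrightarrow> A \<noteq> {1..n} \<Longrightarrow> card A < n"
proof -
  assume "A \<subseteq> {1..n}" "A \<noteq> {1..n}"
  then have "A \<subset> {1..n}" by auto
  then have "card A < card {1..n}" by (rule psubset_card_mono[OF finite_atLeastAtMost])
  then show ?thesis by simp
qed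

lemma LD_Dprime: "n \<ge> 1 \<Longrightarrow> LD n (pl n (Delta (n - 1))) = {1..<n} - {n - 1}"
proof -
  assume n: "n \<ge> 1"
  have e: "pl n (Delta (n - 1)) = pp n {1..n - 1}" using Dprime[OF n] by (simp add: pp_def)
  have "LD n (pp n {1..n - 1}) = {k \<in> {1..<n}. \<not> (k \<in> {1..n - 1} \<and> Suc k \<notin> {1..n - 1})}"
    by (rule LD_pp) auto
  also have "\<dots> = {1..<n} - {n - 1}" by auto
  finally show ?thesis using e by simp
qed

lemma Dprime_pp: "n \<ge> 1 \<Longrightarrow> pl n (Delta (n - 1)) = pp n {1..n - 1}"
  using Dprime by (simp add: pp_def)

lemma Tup_TA: assumes n: "n \<ge> 1" shows "card (Tup n) = card (TA n)"
proof -
  have into: "Gm n ` TA n = Tup n"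
  proof
    show "Gm n ` TA n \<subseteq> Tup n"
    proof
      fix ps assume "ps \<in> Gm n ` TA n"
      then obtain A w where Aw: "(A, w) \<in> TA n" and ps: "ps = Gm n (A, w)" by auto
      have A: "A \<subseteq> {1..n}" "A \<noteq> {1..n}" "w \<in> P n"
        and C: "\<forall>k\<in>{1..<n}. (k \<in> A \<and> Suc k \<notin> A) \<or> w ! k < w ! (k - 1)" using Aw by (auto simp: TA_def)
      define j where "j = Suc (card A)"
      have cA: "card A < n" using card_lt A by simp
      have j: "j \<in> {1..n}" using cA by (simp add: j_def)
      define A3 where "A3 = {1..n} - {j}"
      have A3: "A3 \<subseteq> {1..n}" by (auto simp: A3_def)
      have cA3: "card A3 = n - 1" using j by (simp add: A3_def)
      have ps': "ps = [w, pp n A, pp n A3, pl n (Delta (n - 1))]" using ps by (simp add: Gm_def j_def A3_def)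
      have c0: "LD n (pp n A) \<subseteq> RD n w"
      proof
        fix k assume "k \<in> LD n (pp n A)"
        then have k1: "k \<in> {1..<n}" "\<not> (k \<in> A \<and> Suc k \<notin> A)" using LD_pp[OF A(1)] by auto
        then have "w ! k < w ! (k - 1)" using C by blast
        then show "k \<in> RD n w" using k1 by (simp add: RD_def)
      qed
      have c1: "LD n (pp n A3) \<subseteq> RD n (pp n A)"
      proof
        fix k assume k: "k \<in> LD n (pp n A3)"
        then have k1: "k \<in> {1..<n}" "\<not> (k \<in> A3 \<and> Suc k \<notin> A3)" using LD_pp[OF A3] by auto
        have "k \<noteq> card A"
        proof
          assume "k = card A"
          then have "k \<in> A3" "Suc k \<notin> A3" using k1 by (auto simp: A3_def j_def)
          then show False using k1 by simp
        qed
        then show "k \<in> RD n (pp n A)" using RD_pp[OF A(1)] k1 by auto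
      qed
      have c2: "LD n (pl n (Delta (n - 1))) \<subseteq> RD n (pp n A3)"
        using LD_Dprime[OF n] RD_pp[OF A3] cA3 by simp
      have "\<forall>k. Suc k < length ps \<longrightarrow> LD n (ps ! Suc k) \<subseteq> RD n (ps ! k)"
      proof (intro allI impI)
        fix k assume "Suc k < length ps"
        then have "k = 0 \<or> k = 1 \<or> k = 2" using ps' by auto
        then show "LD n (ps ! Suc k) \<subseteq> RD n (ps ! k)" using c0 c1 c2 ps' by auto
      qed
      moreover have "set ps \<subseteq> P n" using ps' A pp_P[OF A(1)] pp_P[OF A3] pl_P[OF Delta_words[of "n - 1" n]] by auto
      ultimately show "ps \<in> Tup n" using ps' by (simp add: Tup_def)
    qed
    show "Tup n \<subseteq> Gm n ` TA n"
    proof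
      fix ps assume ps: "ps \<in> Tup n"
      then have l4: "length ps = 4" by (simp add: Tup_def)
      obtain p1 r1 where r1: "ps = p1 # r1" using l4 by (cases ps) auto
      obtain p2 r2 where r2: "r1 = p2 # r2" using l4 r1 by (cases r1) auto
      obtain p3 r3 where r3: "r2 = p3 # r3" using l4 r1 r2 by (cases r2) auto
      obtain p4 r4 where r4: "r3 = p4 # r4" using l4 r1 r2 r3 by (cases r3) auto
      have "r4 = []" using l4 r1 r2 r3 r4 by simp
      then have pse: "ps = [p1, p2, p3, p4]" using r1 r2 r3 r4 by simp
      have PP: "p1 \<in> P n" "p2 \<in> P n" "p3 \<in> P n" using ps pse by (auto simp: Tup_def)
      have p4: "p4 = pl n (Delta (n - 1))" using ps pse by (simp add: Tup_def)
      have C: "LD n p2 \<subseteq> RD n p1" "LD n p3 \<subseteq> RD n p2" "LD n p4 \<subseteq> RD n p3"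
      proof -
        have H: "\<forall>k. Suc k < length ps \<longrightarrow> LD n (ps ! Suc k) \<subseteq> RD n (ps ! k)" using ps by (simp add: Tup_def)
        show "LD n p2 \<subseteq> RD n p1" using H[rule_format, of 0] pse by simp
        show "LD n p3 \<subseteq> RD n p2" using H[rule_format, of 1] pse by simp
        show "LD n p4 \<subseteq> RD n p3" using H[rule_format, of 2] pse by simp
      qed
      have "{1..<n} - {n - 1} \<subseteq> RD n p3" using C(3) p4 LD_Dprime[OF n] by simp
      then have "\<exists>A. A \<subseteq> {1..n} \<and> card A = n - 1 \<and> p3 = pp n A"
        by (intro RD_pp_inv[OF PP(3)]) simp_all
      then obtain A3 where A3: "A3 \<subseteq> {1..n}" "card A3 = n - 1" "p3 = pp n A3" by blast
      have "card ({1..n} - A3) = 1" using A3 n by (simp add: card_Diff_subset fin_sub)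
      then have "\<exists>j. {1..n} - A3 = {j}" by (simp add: card_1_singleton_iff)
      then obtain j where j1: "{1..n} - A3 = {j}" by blast
      have j: "j \<in> {1..n}" "A3 = {1..n} - {j}" using j1 A3(1) by auto
      have LD3: "LD n p3 = {k \<in> {1..<n}. \<not> (k \<in> A3 \<and> Suc k \<notin> A3)}" using LD_pp[OF A3(1)] A3(3) by simp
      have "{1..<n} - {j - 1} \<subseteq> RD n p2"
      proof
        fix k assume k: "k \<in> {1..<n} - {j - 1}"
        have "\<not> (k \<in> A3 \<and> Suc k \<notin> A3)"
        proof
          assume "k \<in> A3 \<and> Suc k \<notin> A3"
          then have "Suc k = j" using k j by auto
          then show False using k by auto
        qed
        then have "k \<in> LD n p3" using LD3 k by auto
        then show "k \<in> RD n p2" using C(2) by auto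
      qed
      moreover have "j - 1 \<le> n" using j(1) by auto
      ultimately obtain A where A: "A \<subseteq> {1..n}" "card A = j - 1" "p2 = pp n A"
        using RD_pp_inv[OF PP(2)] by blast
      have SA: "Suc (card A) = j" using A(2) j(1) by simp
      have An: "A \<noteq> {1..n}" using A(2) j(1) by auto
      have cond: "\<forall>k\<in>{1..<n}. (k \<in> A \<and> Suc k \<notin> A) \<or> p1 ! k < p1 ! (k - 1)"
        using C(1) LD_pp[OF A(1)] A(3) by (auto simp: RD_def)
      have "(A, p1) \<in> TA n" using A An PP(1) cond by (simp add: TA_def)
      moreover have "ps = Gm n (A, p1)" using pse A(3) A3(3) j(2) SA p4 by (simp add: Gm_def)
      ultimately show "ps \<in> Gm n ` TA n" by blast
    qed
  qed
  have inj: "inj_on (Gm n) (TA n)"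
  proof (rule inj_onI)
    fix p q assume p: "p \<in> TA n" and q: "q \<in> TA n" and e: "Gm n p = Gm n q"
    obtain A w where pp': "p = (A, w)" by (cases p)
    obtain A' w' where qq: "q = (A', w')" by (cases q)
    have A: "A \<subseteq> {1..n}" "A \<noteq> {1..n}" using p pp' by (auto simp: TA_def)
    have A': "A' \<subseteq> {1..n}" "A' \<noteq> {1..n}" using q qq by (auto simp: TA_def)
    have e1: "w = w'" "pp n A = pp n A'" "pp n ({1..n} - {Suc (card A)}) = pp n ({1..n} - {Suc (card A')})"
      using e pp' qq by (auto simp: Gm_def)
    have j: "Suc (card A) \<in> {1..n}" "Suc (card A') \<in> {1..n}" using card_lt[OF A(1,2)] card_lt[OF A'(1,2)] by auto
    have "last (pp n ({1..n} - {Suc (card A)})) = last (pp n ({1..n} - {Suc (card A')}))" using e1(3) by simp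
    then have "Suc (card A) = Suc (card A')" using last_pp[OF j(1)] last_pp[OF j(2)] by simp
    then have "A = A'" using pp_inj[OF A(1) A'(1)] e1(2) by simp
    then show "p = q" using pp' qq e1(1) by simp
  qed
  show ?thesis using card_image[OF inj] into by simp
qed

definition xo :: "nat \<Rightarrow> nat set \<Rightarrow> bool list" where
  "xo n A = map (\<lambda>k. k \<in> A) [1..<Suc n]"

lemma xo_len[simp]: "length (xo n A) = n"
  by (simp add: xo_def)

lemma xo_nth: "i < n \<Longrightarrow> xo n A ! i = (Suc i \<in> A)"
  by (simp add: xo_def nth_upt del: upt_Suc)

lemma TA_TT: assumes n: "n \<ge> 1"
  shows "card (TA n) = card (TT {1..n} - {(replicate n True, dec {1..n})})"
proof -
  define H where "H = (\<lambda>(A, w::nat list). (xo n A, w))"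
  have vx: "valid (xo n A) w \<longleftrightarrow> (\<forall>k\<in>{1..<n}. (k \<in> A \<and> Suc k \<notin> A) \<or> w ! k < w ! (k - 1))"
    if "length w = n" for A w
  proof -
    have "valid (xo n A) w \<longleftrightarrow> (\<forall>i. Suc i < n \<longrightarrow> (xo n A ! i \<and> \<not> xo n A ! Suc i) \<or> w ! Suc i < w ! i)"
      using valid_nth[of "xo n A" w] that by simp
    also have "\<dots> \<longleftrightarrow> (\<forall>i. Suc i < n \<longrightarrow> (Suc i \<in> A \<and> Suc (Suc i) \<notin> A) \<or> w ! Suc i < w ! i)"
      by (auto simp: xo_nth)
    also have "\<dots> \<longleftrightarrow> (\<forall>k\<in>{1..<n}. (k \<in> A \<and> Suc k \<notin> A) \<or> w ! k < w ! (k - 1))"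
    proof
      assume L: "\<forall>i. Suc i < n \<longrightarrow> (Suc i \<in> A \<and> Suc (Suc i) \<notin> A) \<or> w ! Suc i < w ! i"
      show "\<forall>k\<in>{1..<n}. (k \<in> A \<and> Suc k \<notin> A) \<or> w ! k < w ! (k - 1)"
      proof
        fix k assume "k \<in> {1..<n}"
        then obtain i where "k = Suc i" "Suc i < n" by (cases k) auto
        then show "(k \<in> A \<and> Suc k \<notin> A) \<or> w ! k < w ! (k - 1)" using L by simp
      qed
    next
      assume R: "\<forall>k\<in>{1..<n}. (k \<in> A \<and> Suc k \<notin> A) \<or> w ! k < w ! (k - 1)"
      show "\<forall>i. Suc i < n \<longrightarrow> (Suc i \<in> A \<and> Suc (Suc i) \<notin> A) \<or> w ! Suc i < w ! i"
      proof (intro allI impI)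
        fix i assume "Suc i < n"
        then have "Suc i \<in> {1..<n}" by simp
        then show "(Suc i \<in> A \<and> Suc (Suc i) \<notin> A) \<or> w ! Suc i < w ! i" using R by fastforce
      qed
    qed
    finally show ?thesis .
  qed
  have xo_inj: "A = A'" if "A \<subseteq> {1..n}" "A' \<subseteq> {1..n}" "xo n A = xo n A'" for A A'
  proof -
    have "k \<in> A \<longleftrightarrow> k \<in> A'" if k: "k \<in> {1..n}" for k
    proof -
      have "xo n A ! (k - 1) = xo n A' ! (k - 1)" using \<open>xo n A = xo n A'\<close> by simp
      moreover have "k - 1 < n" "Suc (k - 1) = k" using k by auto
      ultimately show ?thesis using xo_nth[of "k - 1" n A] xo_nth[of "k - 1" n A'] by simp
    qed
    then show ?thesis using that(1,2) by blast
  qed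
  have img: "H ` TA n = TT {1..n} - {(replicate n True, dec {1..n})}"
  proof
    show "H ` TA n \<subseteq> TT {1..n} - {(replicate n True, dec {1..n})}"
    proof
      fix z assume "z \<in> H ` TA n"
      then obtain A w where Aw: "(A, w) \<in> TA n" and z: "z = (xo n A, w)" by (auto simp: H_def)
      have A: "A \<subseteq> {1..n}" "A \<noteq> {1..n}" "w \<in> P n"
        and C: "\<forall>k\<in>{1..<n}. (k \<in> A \<and> Suc k \<notin> A) \<or> w ! k < w ! (k - 1)" using Aw by (auto simp: TA_def)
      have lw: "length w = n" using P_length[OF A(3)] .
      have "valid (xo n A) w" using vx[OF lw] C by simp
      then have "z \<in> TT {1..n}" using z lw A(3) by (simp add: TT_def P_def)
      moreover have "xo n A \<noteq> replicate n True"
      proof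
        assume e: "xo n A = replicate n True"
        have "k \<in> A" if "k \<in> {1..n}" for k
        proof -
          have "k - 1 < n" "Suc (k - 1) = k" using that by auto
          then show ?thesis using xo_nth[of "k - 1" n A] e by simp
        qed
        then show False using A(1,2) by blast
      qed
      ultimately show "z \<in> TT {1..n} - {(replicate n True, dec {1..n})}" using z by simp
    qed
    show "TT {1..n} - {(replicate n True, dec {1..n})} \<subseteq> H ` TA n"
    proof
      fix z assume z: "z \<in> TT {1..n} - {(replicate n True, dec {1..n})}"
      obtain x w where zxw: "z = (x, w)" by (cases z)
      have xw: "length x = length w" "distinct w" "set w = {1..n}" "valid x w" using z zxw by (auto simp: TT_def)
      have lw: "length w = n" using xw(2,3) distinct_card by fastforce
      define A where "A = {k \<in> {1..n}. x ! (k - 1)}"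
      have xA: "xo n A = x" by (rule nth_equalityI) (use xw lw in \<open>auto simp: xo_nth A_def\<close>)
      have A1: "A \<subseteq> {1..n}" by (auto simp: A_def)
      have A2: "A \<noteq> {1..n}"
      proof
        assume "A = {1..n}"
        moreover have "xo n {1..n} = replicate n True" by (rule nth_equalityI) (auto simp: xo_nth)
        ultimately have xr: "x = replicate n True" using xA by simp
        then have "noexit x" using noexit_rep[of 0 n] by simp
        then have "decr w" using noexit_valid xw by blast
        then have "w = dec {1..n}" using decr_dec xw(3) by metis
        then show False using z zxw xr by simp
      qed
      have "w \<in> P n" using xw by (simp add: P_def)
      moreover have "\<forall>k\<in>{1..<n}. (k \<in> A \<and> Suc k \<notin> A) \<or> w ! k < w ! (k - 1)"
        using vx[OF lw, of A] xA xw(4) by simp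
      ultimately have "(A, w) \<in> TA n" using A1 A2 by (simp add: TA_def)
      moreover have "z = H (A, w)" using zxw xA by (simp add: H_def)
      ultimately show "z \<in> H ` TA n" by blast
    qed
  qed
  have inj: "inj_on H (TA n)"
  proof (rule inj_onI)
    fix p q assume p: "p \<in> TA n" and q: "q \<in> TA n" and e: "H p = H q"
    obtain A w where pp': "p = (A, w)" by (cases p)
    obtain A' w' where qq: "q = (A', w')" by (cases q)
    have "A \<subseteq> {1..n}" "A' \<subseteq> {1..n}" using p q pp' qq by (auto simp: TA_def)
    moreover have "xo n A = xo n A'" "w = w'" using e pp' qq by (auto simp: H_def)
    ultimately show "p = q" using xo_inj pp' qq by simp
  qed
  show ?thesis using card_image[OF inj] img by simp
qed

lemma card_TTm: assumes n: "n \<ge> 1"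
  shows "card (TT {1..n} - {(replicate n True, dec {1..n})}) = UU n - 1"
proof -
  have f: "finite {1..n}" by simp
  have d: "set (dec {1..n}) = {1..n}" "distinct (dec {1..n})" "length (dec {1..n}) = n" "decr (dec {1..n})"
    using dec_props[OF f] by auto
  have "valid (replicate n True) (dec {1..n})"
    using noexit_valid[of "replicate n True" "dec {1..n}"] noexit_rep[of 0 n] d by simp
  then have "(replicate n True, dec {1..n}) \<in> TT {1..n}" using d by (simp add: TT_def)
  then show ?thesis using card_TT[OF f] by (simp add: card_Diff_singleton)
qed

theorem corollary4p7:
  fixes u :: "nat \<Rightarrow> nat"
  assumes "u 1 = 1"
    and "\<And>n. n \<ge> 2 \<Longrightarrow> u n = n * u (n - 1) + n"
  shows "\<forall>n \<ge> 1. b n 4 (cls n (Delta (n - 1))) = u n"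
proof (intro allI impI)
  fix n :: nat assume n: "n \<ge> 1"
  have "b n 4 (cls n (Delta (n - 1))) = card (Tup n)" using b_Tup[OF n] .
  also have "\<dots> = card (TA n)" using Tup_TA[OF n] .
  also have "\<dots> = UU n - 1" using TA_TT[OF n] card_TTm[OF n] by simp
  also have "\<dots> = u n" using u_eq[OF assms n] by simp
  finally show "b n 4 (cls n (Delta (n - 1))) = u n" .
qed

end
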